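(* Let $k\ge1$, let $A_k$ be the matrix defined below, let $\mathbf{b}\in\mathbb{Z}^{2k+1}$ and $G=G_{A_k,\mathbf{b},\mathcal{G}(A_k)}$. Then for any two vertices $\mathbf{u}\in C_s(\mathbf{b})$, $\mathbf{u}'\in C_{s'}(\mathbf{b})$ with $s\neq s'$ that are adjacent in $G$, there exist $\delta(G)$ pairwise edge-disjoint paths in $G$ connecting them.
   Context: $I_k$ is the $k\times k$ identity, $\mathbf{1}_k$ the all-ones vector in $\mathbb{Z}^k$. Define $$A_k=\begin{pmatrix} I_k & I_k & 0 & 0 & -\mathbf{1}_k & \mathbf{0}\\ 0&0&I_k&I_k&\mathbf{0}&-\mathbf{1}_k\\ 0&0&0&0&1&1\end{pmatrix}\in\mathbb{Z}^{(2k+1)\times(4k+2)}$$ (zero blocks of appropriate sizes; last two columns are single columns). Fiber: $\mathcal{F}_A(\mathbf{b})=\{\mathbf{u}\in\mathbb{Z}^n_{\ge0}:A\mathbf{u}=\mathbf{b}\}$; for $\mathcal{M}\subset\mathbb{Z}^n$, $G_{A,\mathbf{b},\mathcal{M}}$ is the graph on $\mathcal{F}_A(\mathbf{b})$ with distinct $\mathbf{u},\mathbf{v}$ adjacent iff $\mathbf{u}-\mathbf{v}\in\pm\mathcal{M}$. The Graver basis $\mathcal{G}(A)$ is the set of $\sqsubseteq$-minimal elements of $(\ker A\cap\mathbb{Z}^n)\setminus\{\mathbf{0}\}$, where $\mathbf{u}\sqsubseteq\mathbf{v}$ iff $u_iv_i\ge0$ and $|u_i|\le|v_i|$ for all $i$.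 $\delta$ is the minimal vertex degree. For an integer $s$, $C_s(\mathbf{b}):=\{\mathbf{u}\in\mathcal{F}_{A_k}(\mathbf{b}):u_{4k+1}=s\}$ (the "boxes" of the fiber). *)

theory Defs
  imports Main
begin

text \<open>Integer vectors in Z^n are modelled as functions nat => int that vanish
  outside the index range {0..<n} (indices are 0-based). Matrices are functions
  row => column => int.\<close>

definition zvecs :: "nat \<Rightarrow> (nat \<Rightarrow> int) set" where
  "zvecs n = {u. \<forall>i\<ge>n. u i = 0}"

definition matvec :: "nat \<Rightarrow> (nat \<Rightarrow> nat \<Rightarrow> int) \<Rightarrow> (nat \<Rightarrow> int) \<Rightarrow> nat \<Rightarrow> int" where
  "matvec n M u i = (\<Sum>j<n. M i j * u j)"

text \<open>The matrix A_k of size (2k+1) x (4k+2), 0-based indices.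
  Rows i<k: e_i + e_(k+i) - e_(4k). Rows k+i (i<k): e_(2k+i) + e_(3k+i) - e_(4k+1).
  Row 2k: e_(4k) + e_(4k+1).\<close>
definition Ak :: "nat \<Rightarrow> nat \<Rightarrow> nat \<Rightarrow> int" where
  "Ak k i j =
     (if i < k then
        (if j = i \<or> j = k + i then 1 else if j = 4*k then -1 else 0)
      else if i < 2*k then
        (if j = k + i \<or> j = 2*k + i then 1 else if j = 4*k + 1 then -1 else 0)
      else if i = 2*k then
        (if j = 4*k \<or> j = 4*k + 1 then 1 else 0)
      else 0)"

definition intker :: "nat \<Rightarrow> nat \<Rightarrow> (nat \<Rightarrow> nat \<Rightarrow> int) \<Rightarrow> (nat \<Rightarrow> int) set" where
  "intker m n M = {u \<in> zvecs n. \<forall>i<m. matvec n M u i = 0}"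

definition conf_le :: "(nat \<Rightarrow> int) \<Rightarrow> (nat \<Rightarrow> int) \<Rightarrow> bool" where
  "conf_le u v \<longleftrightarrow> (\<forall>i. u i * v i \<ge> 0 \<and> \<bar>u i\<bar> \<le> \<bar>v i\<bar>)"

definition graver :: "nat \<Rightarrow> nat \<Rightarrow> (nat \<Rightarrow> nat \<Rightarrow> int) \<Rightarrow> (nat \<Rightarrow> int) set" where
  "graver m n M = {u \<in> intker m n M - {\<lambda>_. 0}.
      \<not> (\<exists>v \<in> intker m n M - {\<lambda>_. 0}. conf_le v u \<and> v \<noteq> u)}"

definition fiber :: "nat \<Rightarrow> nat \<Rightarrow> (nat \<Rightarrow> nat \<Rightarrow> int) \<Rightarrow> (nat \<Rightarrow> int) \<Rightarrow> (nat \<Rightarrow> int) set" where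
  "fiber m n M b = {u \<in> zvecs n. (\<forall>i. u i \<ge> 0) \<and> (\<forall>i<m. matvec n M u i = b i)}"

definition fadj :: "(nat \<Rightarrow> int) set \<Rightarrow> (nat \<Rightarrow> int) set \<Rightarrow> (nat \<Rightarrow> int) \<Rightarrow> (nat \<Rightarrow> int) \<Rightarrow> bool" where
  "fadj F Mv u v \<longleftrightarrow> u \<in> F \<and> v \<in> F \<and> u \<noteq> v \<and> ((\<lambda>i. u i - v i) \<in> Mv \<or> (\<lambda>i. v i - u i) \<in> Mv)"

definition gdegree :: "(nat \<Rightarrow> int) set \<Rightarrow> (nat \<Rightarrow> int) set \<Rightarrow> (nat \<Rightarrow> int) \<Rightarrow> nat" where
  "gdegree F Mv u = card {v. fadj F Mv u v}"

definition min_degree :: "(nat \<Rightarrow> int) set \<Rightarrow> (nat \<Rightarrow> int) set \<Rightarrow> nat" where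
  "min_degree F Mv = Min (gdegree F Mv ` F)"

definition gpath :: "(nat \<Rightarrow> int) set \<Rightarrow> (nat \<Rightarrow> int) set \<Rightarrow> (nat \<Rightarrow> int) list
     \<Rightarrow> (nat \<Rightarrow> int) \<Rightarrow> (nat \<Rightarrow> int) \<Rightarrow> bool" where
  "gpath F Mv p u v \<longleftrightarrow> p \<noteq> [] \<and> hd p = u \<and> last p = v \<and> distinct p \<and> set p \<subseteq> F \<and>
     (\<forall>i. Suc i < length p \<longrightarrow> fadj F Mv (p ! i) (p ! Suc i))"

definition path_edges :: "'a list \<Rightarrow> 'a set set" where
  "path_edges p = {{p ! i, p ! Suc i} | i. Suc i < length p}"

text \<open>The box C_s(b): fiber elements whose (4k+1)-st coordinate (0-based index 4k) equals s.\<close>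
definition box :: "nat \<Rightarrow> (nat \<Rightarrow> int) \<Rightarrow> int \<Rightarrow> (nat \<Rightarrow> int) set" where
  "box k b s = {u \<in> fiber (2*k+1) (4*k+2) (Ak k) b. u (4*k) = s}"

end

theory Submission
  imports Defs
begin


lemma row1:
  assumes "i < k"
  shows "matvec (4*k+2) (Ak k) v i = v i + v (k+i) - v (4*k)"
proof -
  have "\<And>j. Ak k i j * v j = (if j = i then v i else 0) + (if j = k+i then v (k+i) else 0) - (if j = 4*k then v (4*k) else 0)"
    using assms by (auto simp: Ak_def)
  hence "matvec (4*k+2) (Ak k) v i = (\<Sum>j<4*k+2. (if j = i then v i else 0) + (if j = k+i then v (k+i) else 0) - (if j = 4*k then v (4*k) else 0))"
    unfolding matvec_def by simp
  also have "\<dots> = v i + v (k+i) - v (4*k)"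
    using assms by (simp add: sum.distrib sum_subtractf)
  finally show ?thesis .
qed

lemma row2:
  assumes "i < k"
  shows "matvec (4*k+2) (Ak k) v (k+i) = v (2*k+i) + v (3*k+i) - v (4*k+1)"
proof -
  have "\<And>j. Ak k (k+i) j * v j = (if j = 2*k+i then v (2*k+i) else 0) + (if j = 3*k+i then v (3*k+i) else 0) - (if j = 4*k+1 then v (4*k+1) else 0)"
    using assms by (auto simp: Ak_def)
  hence "matvec (4*k+2) (Ak k) v (k+i) = (\<Sum>j<4*k+2. (if j = 2*k+i then v (2*k+i) else 0) + (if j = 3*k+i then v (3*k+i) else 0) - (if j = 4*k+1 then v (4*k+1) else 0))"
    unfolding matvec_def by simp
  also have "\<dots> = v (2*k+i) + v (3*k+i) - v (4*k+1)"
    using assms by (simp add: sum.distrib sum_subtractf)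
  finally show ?thesis .
qed

lemma row3:
  shows "matvec (4*k+2) (Ak k) v (2*k) = v (4*k) + v (4*k+1)"
proof -
  have "\<And>j. Ak k (2*k) j * v j = (if j = 4*k then v (4*k) else 0) + (if j = 4*k+1 then v (4*k+1) else 0)"
    by (auto simp: Ak_def)
  hence "matvec (4*k+2) (Ak k) v (2*k) = (\<Sum>j<4*k+2. (if j = 4*k then v (4*k) else 0) + (if j = 4*k+1 then v (4*k+1) else 0))"
    unfolding matvec_def by simp
  also have "\<dots> = v (4*k) + v (4*k+1)"
    by (simp add: sum.distrib)
  finally show ?thesis .
qed


lemma coord_cases:
  fixes n k :: nat
  assumes "n < 4*k+2"
  obtains (x) i where "i<k" "n = i" | (y) i where "i<k" "n = k+i" | (z) i where "i<k" "n = 2*k+i"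
    | (w) i where "i<k" "n = 3*k+i" | (p) "n = 4*k" | (q) "n = 4*k+1"
proof -
  consider "n < k" | "k \<le> n \<and> n < 2*k" | "2*k \<le> n \<and> n < 3*k" | "3*k \<le> n \<and> n < 4*k" | "n = 4*k" | "n = 4*k+1"
    using assms by linarith
  then show ?thesis
  proof cases
    case 1 then show ?thesis using x by blast
  next
    case 2 then show ?thesis using y[of "n-k"] by auto
  next
    case 3 then show ?thesis using z[of "n-2*k"] by auto
  next
    case 4 then show ?thesis using w[of "n-3*k"] by auto
  qed (use p q in auto)
qed

lemma vec_eqI:
  assumes "v \<in> zvecs (4*k+2)" "h \<in> zvecs (4*k+2)"
    and "\<And>i. i < k \<Longrightarrow> v i = h i \<and> v (k+i) = h (k+i) \<and> v (2*k+i) = h (2*k+i) \<and> v (3*k+i) = h (3*k+i)"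
    and "v (4*k) = h (4*k)" "v (4*k+1) = h (4*k+1)"
  shows "v = h"
proof
  fix n show "v n = h n"
  proof (cases "n < 4*k+2")
    case True then show ?thesis
      by (cases rule: coord_cases[of n k]) (use assms in auto)
  next
    case False then show ?thesis using assms(1,2) by (simp add: zvecs_def)
  qed
qed

lemma fiber_iff:
  "v \<in> fiber (2*k+1) (4*k+2) (Ak k) b \<longleftrightarrow>
    v \<in> zvecs (4*k+2) \<and> (\<forall>n. v n \<ge> 0) \<and>
    (\<forall>i<k. v i + v (k+i) - v (4*k) = b i \<and> v (2*k+i) + v (3*k+i) - v (4*k+1) = b (k+i)) \<and>
    v (4*k) + v (4*k+1) = b (2*k)"
proof -
  have "(\<forall>i<2*k+1. matvec (4*k+2) (Ak k) v i = b i) \<longleftrightarrow>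
    (\<forall>i<k. v i + v (k+i) - v (4*k) = b i \<and> v (2*k+i) + v (3*k+i) - v (4*k+1) = b (k+i)) \<and>
    v (4*k) + v (4*k+1) = b (2*k)" (is "?L \<longleftrightarrow> ?R")
  proof
    assume L: ?L
    show ?R
    proof (intro conjI allI impI)
      fix i assume "i<k"
      then show "v i + v (k+i) - v (4*k) = b i" "v (2*k+i) + v (3*k+i) - v (4*k+1) = b (k+i)"
        using L[rule_format, of i] L[rule_format, of "k+i"] row1[of i k v] row2[of i k v] by auto
    next
      show "v (4*k) + v (4*k+1) = b (2*k)" using L[rule_format, of "2*k"] row3[of k v] by auto
    qed
  next
    assume R: ?R
    show ?L
    proof (intro allI impI)
      fix i assume i: "i < 2*k+1"
      consider "i < k" | "k \<le> i \<and> i < 2*k" | "i = 2*k" using i by linarith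
      then show "matvec (4*k+2) (Ak k) v i = b i"
      proof cases
        case 1 then show ?thesis using R row1[of i k v] by auto
      next
        case 2
        then obtain j where j: "j < k" "i = k+j" by (metis add_diff_inverse_nat less_diff_conv2 mult_2 not_less)
        then show ?thesis using R row2[of j k v] by auto
      next
        case 3 then show ?thesis using R row3[of k v] by auto
      qed
    qed
  qed
  then show ?thesis unfolding fiber_def by auto
qed

lemma intker_iff:
  "v \<in> intker (2*k+1) (4*k+2) (Ak k) \<longleftrightarrow>
    v \<in> zvecs (4*k+2) \<and>
    (\<forall>i<k. v i + v (k+i) = v (4*k) \<and> v (2*k+i) + v (3*k+i) = v (4*k+1)) \<and>
    v (4*k) + v (4*k+1) = 0"
proof -
  have "(\<forall>i<2*k+1. matvec (4*k+2) (Ak k) v i = 0) \<longleftrightarrow>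
    (\<forall>i<k. v i + v (k+i) = v (4*k) \<and> v (2*k+i) + v (3*k+i) = v (4*k+1)) \<and>
    v (4*k) + v (4*k+1) = 0" (is "?L \<longleftrightarrow> ?R")
  proof
    assume L: ?L
    show ?R
    proof (intro conjI allI impI)
      fix i assume "i<k"
      then show "v i + v (k+i) = v (4*k)" "v (2*k+i) + v (3*k+i) = v (4*k+1)"
        using L[rule_format, of i] L[rule_format, of "k+i"] row1[of i k v] row2[of i k v] by auto
    next
      show "v (4*k) + v (4*k+1) = 0" using L[rule_format, of "2*k"] row3[of k v] by auto
    qed
  next
    assume R: ?R
    show ?L
    proof (intro allI impI)
      fix i assume i: "i < 2*k+1"
      consider "i < k" | "k \<le> i \<and> i < 2*k" | "i = 2*k" using i by linarith
      then show "matvec (4*k+2) (Ak k) v i = 0"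
      proof cases
        case 1 then show ?thesis using R row1[of i k v] by auto
      next
        case 2
        then obtain j where j: "j < k" "i = k+j" by (metis add_diff_inverse_nat less_diff_conv2 mult_2 not_less)
        then show ?thesis using R row2[of j k v] by auto
      next
        case 3 then show ?thesis using R row3[of k v] by auto
      qed
    qed
  qed
  then show ?thesis unfolding intker_def by auto
qed


definition dW :: "nat \<Rightarrow> nat \<Rightarrow> nat \<Rightarrow> int" where
  "dW k j = (\<lambda>n. if n = j then 1 else if n = j + k then -1 else 0)"

definition isW :: "nat \<Rightarrow> (nat \<Rightarrow> int) \<Rightarrow> bool" where
  "isW k h \<longleftrightarrow> (\<exists>j. (j < k \<or> (2*k \<le> j \<and> j < 3*k)) \<and> (h = dW k j \<or> h = (\<lambda>n. - dW k j n)))"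

definition isU :: "nat \<Rightarrow> (nat \<Rightarrow> int) \<Rightarrow> bool" where
  "isU k h \<longleftrightarrow> h \<in> zvecs (4*k+2) \<and> h (4*k) = 1 \<and> h (4*k+1) = -1 \<and>
     (\<forall>i<k. ((h i = 1 \<and> h (k+i) = 0) \<or> (h i = 0 \<and> h (k+i) = 1)) \<and>
            ((h (2*k+i) = -1 \<and> h (3*k+i) = 0) \<or> (h (2*k+i) = 0 \<and> h (3*k+i) = -1)))"

abbreviation "GR k \<equiv> graver (2*k+1) (4*k+2) (Ak k)"
abbreviation "KER k \<equiv> intker (2*k+1) (4*k+2) (Ak k)"

lemma conf_small:
  assumes "conf_le v h" "\<bar>h n\<bar> \<le> 1"
  shows "v n = 0 \<or> v n = h n"
proof -
  have a: "v n * h n \<ge> 0" "\<bar>v n\<bar> \<le> \<bar>h n\<bar>" using assms(1) unfolding conf_le_def by auto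
  consider "h n = 0" | "h n = 1" | "h n = -1" using assms(2) by linarith
  then show ?thesis
  proof cases
    case 1 then show ?thesis using a by auto
  next
    case 2 then show ?thesis using a by auto
  next
    case 3 then show ?thesis using a by (auto simp: mult_le_0_iff)
  qed
qed

lemma zero_vec: "(\<lambda>_. 0::int) \<in> zvecs n" by (simp add: zvecs_def)

lemma isU_small:
  assumes "isU k h" shows "\<bar>h n\<bar> \<le> 1"
proof (cases "n < 4*k+2")
  case True then show ?thesis
    by (cases rule: coord_cases[of n k]) (use assms in \<open>auto simp: isU_def\<close>)
next
  case False then show ?thesis using assms by (auto simp: isU_def zvecs_def)
qed

lemma isU_ker: assumes "isU k h" shows "h \<in> KER k"
proof -
  have "\<forall>i<k. h i + h (k+i) = h (4*k) \<and> h (2*k+i) + h (3*k+i) = h (4*k+1)"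
  proof (intro allI impI)
    fix i assume i: "i < k"
    have "((h i = 1 \<and> h (k+i) = 0) \<or> (h i = 0 \<and> h (k+i) = 1))"
      "((h (2*k+i) = -1 \<and> h (3*k+i) = 0) \<or> (h (2*k+i) = 0 \<and> h (3*k+i) = -1))"
      "h (4*k) = 1" "h (4*k+1) = -1"
      using assms i unfolding isU_def by blast+
    then show "h i + h (k+i) = h (4*k) \<and> h (2*k+i) + h (3*k+i) = h (4*k+1)" by linarith
  qed
  then show ?thesis using assms unfolding intker_iff isU_def by simp
qed

lemma G1:
  assumes "isU k h" shows "h \<in> GR k"
proof -
  have hk: "h \<in> KER k" using isU_ker[OF assms] .
  have hz: "h \<noteq> (\<lambda>_. 0)"
  proof
    assume "h = (\<lambda>_. 0)" then have "h (4*k) = 0" by simp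
    then show False using assms unfolding isU_def by simp
  qed
  have U: "h \<in> zvecs (4*k+2)" "h (4*k) = 1" "h (4*k+1) = -1"
    "\<And>i. i<k \<Longrightarrow> ((h i = 1 \<and> h (k+i) = 0) \<or> (h i = 0 \<and> h (k+i) = 1)) \<and>
            ((h (2*k+i) = -1 \<and> h (3*k+i) = 0) \<or> (h (2*k+i) = 0 \<and> h (3*k+i) = -1))"
    using assms unfolding isU_def by auto
  have "\<not> (\<exists>v\<in>KER k - {\<lambda>_. 0}. conf_le v h \<and> v \<noteq> h)"
  proof
    assume "\<exists>v\<in>KER k - {\<lambda>_. 0}. conf_le v h \<and> v \<noteq> h"
    then obtain v where v: "v \<in> KER k" "v \<noteq> (\<lambda>_. 0)" "conf_le v h" "v \<noteq> h" by auto
    have sm: "\<And>n. v n = 0 \<or> v n = h n" using conf_small[OF v(3) isU_small[OF assms]] by blast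
    have vk: "v \<in> zvecs (4*k+2)" "\<And>i. i<k \<Longrightarrow> v i + v (k+i) = v (4*k) \<and> v (2*k+i) + v (3*k+i) = v (4*k+1)"
      "v (4*k) + v (4*k+1) = 0"
      using v(1) unfolding intker_iff by auto
    consider "v (4*k) = 0" | "v (4*k) = 1" using sm[of "4*k"] U(2) by auto
    then show False
    proof cases
      case 1
      have "v = (\<lambda>_. 0)"
      proof (rule vec_eqI[OF vk(1) zero_vec])
        fix i assume i: "i<k"
        show "v i = 0 \<and> v (k + i) = 0 \<and> v (2 * k + i) = 0 \<and> v (3 * k + i) = 0"
          using vk(2)[OF i] vk(3) 1 U(4)[OF i] sm[of i] sm[of "k+i"] sm[of "2*k+i"] sm[of "3*k+i"] by auto
      qed (use 1 vk(3) in auto)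
      then show False using v(2) by blast
    next
      case 2
      have "v = h"
      proof (rule vec_eqI[OF vk(1) U(1)])
        fix i assume i: "i<k"
        show "v i = h i \<and> v (k + i) = h (k + i) \<and> v (2 * k + i) = h (2 * k + i) \<and> v (3 * k + i) = h (3 * k + i)"
          using vk(2)[OF i] vk(3) 2 U(4)[OF i] sm[of i] sm[of "k+i"] sm[of "2*k+i"] sm[of "3*k+i"] by auto
      qed (use 2 vk(3) U in auto)
      then show False using v(4) by blast
    qed
  qed
  then show ?thesis using hk hz unfolding graver_def by blast
qed

lemma dW_simps:
  "dW k j j = 1" "0 < k \<Longrightarrow> dW k j (j+k) = -1" "n \<noteq> j \<Longrightarrow> n \<noteq> j+k \<Longrightarrow> dW k j n = 0"
  by (auto simp: dW_def)

lemma G2_pos: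
  assumes j: "j < k \<or> (2*k \<le> j \<and> j < 3*k)"
  shows "dW k j \<in> GR k"
proof -
  let ?h = "dW k j"
  have hz: "?h \<in> zvecs (4*k+2)"
    unfolding zvecs_def
  proof (intro CollectI allI impI)
    fix n assume "4*k+2 \<le> n"
    then have "n \<noteq> j" "n \<noteq> j + k" using j by linarith+
    then show "?h n = 0" by (simp add: dW_simps)
  qed
  have hk: "?h \<in> KER k"
    unfolding intker_iff using j hz by (auto simp: dW_def)
  have hnz: "?h \<noteq> (\<lambda>_. 0)"
  proof
    assume "?h = (\<lambda>_. 0)" then have "?h j = 0" by simp
    then show False by (simp add: dW_simps)
  qed
  have sm1: "\<And>n. \<bar>?h n\<bar> \<le> 1" by (auto simp: dW_def)
  have "\<not> (\<exists>v\<in>KER k - {\<lambda>_. 0}. conf_le v ?h \<and> v \<noteq> ?h)"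
  proof
    assume "\<exists>v\<in>KER k - {\<lambda>_. 0}. conf_le v ?h \<and> v \<noteq> ?h"
    then obtain v where v: "v \<in> KER k" "v \<noteq> (\<lambda>_. 0)" "conf_le v ?h" "v \<noteq> ?h" by auto
    have sm: "\<And>n. v n = 0 \<or> v n = ?h n" using conf_small[OF v(3) sm1] by blast
    have out: "\<And>n. n \<noteq> j \<Longrightarrow> n \<noteq> j + k \<Longrightarrow> v n = 0" using sm dW_simps(3) by metis
    have vk: "v \<in> zvecs (4*k+2)" "\<And>i. i<k \<Longrightarrow> v i + v (k+i) = v (4*k) \<and> v (2*k+i) + v (3*k+i) = v (4*k+1)"
      "v (4*k) + v (4*k+1) = 0"
      using v(1) unfolding intker_iff by auto
    have p: "v (4*k) = 0" "v (4*k+1) = 0" using out j by auto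
    have rel: "v j + v (j+k) = 0"
    proof (cases "j < k")
      case True then show ?thesis using vk(2)[of j] p by (simp add: add.commute)
    next
      case False
      then obtain i where i: "i < k" "j = 2*k+i" using j by (intro that[of "j - 2*k"]) auto
      then have "j + k = 3*k+i" by simp
      then show ?thesis using vk(2)[of i] p i by simp
    qed
    consider "v j = 0" | "v j = 1" using sm[of j] dW_simps(1)[of k j] by auto
    then show False
    proof cases
      case 1
      then have vjk: "v (j+k) = 0" using rel by simp
      have "v = (\<lambda>_. 0)"
      proof (rule ext)
        fix x show "v x = 0" by (cases "x = j"; cases "x = j+k") (use 1 vjk out in auto)
      qed
      then show False using v(2) by blast
    next
      case 2
      then have "v (j+k) = -1" using rel by simp
      then have "v = ?h" using 2 out by (auto simp: dW_def)
      then show False using v(4) by blast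
    qed
  qed
  then show ?thesis using hk hnz unfolding graver_def by blast
qed

lemma graver_neg:
  assumes "h \<in> GR k" shows "(\<lambda>n. - h n) \<in> GR k"
proof -
  have hk: "h \<in> KER k" and hz: "h \<noteq> (\<lambda>_. 0)"
    and m: "\<not> (\<exists>v\<in>KER k - {\<lambda>_. 0}. conf_le v h \<and> v \<noteq> h)"
    using assms unfolding graver_def by auto
  have negk: "\<And>v. v \<in> KER k \<Longrightarrow> (\<lambda>n. - v n) \<in> KER k"
    unfolding intker_iff zvecs_def by auto
  have "(\<lambda>n. - h n) \<in> KER k" using negk[OF hk] .
  moreover have "(\<lambda>n. - h n) \<noteq> (\<lambda>_. 0)"
  proof
    assume "(\<lambda>n. - h n) = (\<lambda>_. 0)"
    then have "h = (\<lambda>_. 0)" by (auto simp: fun_eq_iff)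
    then show False using hz by blast
  qed
  moreover have "\<not> (\<exists>v\<in>KER k - {\<lambda>_. 0}. conf_le v (\<lambda>n. - h n) \<and> v \<noteq> (\<lambda>n. - h n))"
  proof
    assume "\<exists>v\<in>KER k - {\<lambda>_. 0}. conf_le v (\<lambda>n. - h n) \<and> v \<noteq> (\<lambda>n. - h n)"
    then obtain v where v: "v \<in> KER k" "v \<noteq> (\<lambda>_. 0)" "conf_le v (\<lambda>n. - h n)" "v \<noteq> (\<lambda>n. - h n)" by auto
    have "(\<lambda>n. - v n) \<in> KER k" using negk[OF v(1)] .
    moreover have "(\<lambda>n. - v n) \<noteq> (\<lambda>_. 0)"
    proof
      assume "(\<lambda>n. - v n) = (\<lambda>_. 0)"
      then have "v = (\<lambda>_. 0)" by (auto simp: fun_eq_iff)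
      then show False using v(2) by blast
    qed
    moreover have "conf_le (\<lambda>n. - v n) h" using v(3) unfolding conf_le_def by auto
    moreover have "(\<lambda>n. - v n) \<noteq> h"
    proof
      assume "(\<lambda>n. - v n) = h"
      then have "v = (\<lambda>n. - h n)" by force
      then show False using v(4) by blast
    qed
    ultimately show False using m by blast
  qed
  ultimately show ?thesis unfolding graver_def by blast
qed

lemma G2:
  assumes "isW k h" shows "h \<in> GR k"
  using assms G2_pos graver_neg unfolding isW_def by blast


lemma minimal_eq:
  assumes "h \<in> GR k" "v \<in> GR k" "conf_le v h" shows "v = h"
  using assms unfolding graver_def by blast

lemma Gr_ker: "h \<in> GR k \<Longrightarrow> h \<in> KER k" unfolding graver_def by blast
lemma Gr_nz: "h \<in> GR k \<Longrightarrow> h \<noteq> (\<lambda>_. 0)" unfolding graver_def by blast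

lemma Gpos:
  assumes h: "h \<in> GR k" and t: "h (4*k) > 0"
  shows "isU k h"
proof -
  have hk: "h \<in> zvecs (4*k+2)" "\<And>i. i<k \<Longrightarrow> h i + h (k+i) = h (4*k) \<and> h (2*k+i) + h (3*k+i) = h (4*k+1)"
      "h (4*k) + h (4*k+1) = 0"
    using Gr_ker[OF h] unfolding intker_iff by auto
  define v where "v = (\<lambda>n. if n < k then (if h n > 0 then 1 else 0)
      else if n < 2*k then (if h (n-k) > 0 then 0 else 1)
      else if n < 3*k then (if h n < 0 then -1 else 0)
      else if n < 4*k then (if h (n-k) < 0 then 0 else -1)
      else if n = 4*k then 1 else if n = 4*k+1 then -1 else (0::int))"
  have v1: "\<And>i. i < k \<Longrightarrow> v i = (if h i > 0 then 1 else 0)" by (simp add: v_def)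
  have v2: "\<And>i. i < k \<Longrightarrow> v (k+i) = (if h i > 0 then 0 else 1)" by (simp add: v_def)
  have v3: "\<And>i. i < k \<Longrightarrow> v (2*k+i) = (if h (2*k+i) < 0 then -1 else 0)" by (simp add: v_def)
  have v4: "\<And>i. i < k \<Longrightarrow> v (3*k+i) = (if h (2*k+i) < 0 then 0 else -1)"
  proof -
    fix i assume "i<k"
    moreover have "3*k+i-k = 2*k+i" by simp
    ultimately show "v (3*k+i) = (if h (2*k+i) < 0 then 0 else -1)" by (simp add: v_def)
  qed
  have v5: "v (4*k) = 1" "v (4*k+1) = -1" by (simp_all add: v_def)
  have v6: "\<And>n. n \<ge> 4*k+2 \<Longrightarrow> v n = 0" by (simp add: v_def)
  have vz: "v \<in> zvecs (4*k+2)" using v6 by (simp add: zvecs_def)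
  have "isU k v" unfolding isU_def using vz v1 v2 v3 v4 v5 by auto
  then have vG: "v \<in> GR k" by (rule G1)
  have "conf_le v h" unfolding conf_le_def
  proof
    fix n show "0 \<le> v n * h n \<and> \<bar>v n\<bar> \<le> \<bar>h n\<bar>"
    proof (cases "n < 4*k+2")
      case True then show ?thesis
      proof (cases rule: coord_cases[of n k])
        case (x i) then show ?thesis using v1[of i] by auto
      next
        case (y i) then show ?thesis using v2[of i] hk(2)[of i] t by auto
      next
        case (z i) then show ?thesis using v3[of i] by (auto simp: mult_le_0_iff)
      next
        case (w i) then show ?thesis using v4[of i] hk(2)[of i] hk(3) t by auto
      next
        case p then show ?thesis using v5 t by auto
      next
        case q then show ?thesis using v5 t hk(3) by auto
      qed
    next
      case False then show ?thesis using v6 by auto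
    qed
  qed
  then have "v = h" using minimal_eq[OF h vG] by blast
  then show ?thesis using \<open>isU k v\<close> by simp
qed

lemma Wcase:
  assumes h: "h \<in> GR k" and j: "j < k \<or> (2*k \<le> j \<and> j < 3*k)" and hj: "h j \<noteq> 0"
    and hjk: "h (j+k) = - h j"
  shows "isW k h"
proof -
  have kpos: "0 < k" using j by linarith
  define v where "v = (if h j > 0 then dW k j else (\<lambda>n. - dW k j n))"
  have vG: "v \<in> GR k" unfolding v_def using G2_pos[OF j] graver_neg[OF G2_pos[OF j]] by auto
  have "conf_le v h" unfolding conf_le_def
  proof
    fix n show "0 \<le> v n * h n \<and> \<bar>v n\<bar> \<le> \<bar>h n\<bar>"
    proof (cases "n = j")
      case True then show ?thesis using hj by (auto simp: v_def dW_simps mult_le_0_iff)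
    next
      case False
      show ?thesis
      proof (cases "n = j + k")
        case True then show ?thesis using hj hjk kpos False by (auto simp: v_def dW_simps mult_le_0_iff)
      next
        case False2: False
        then show ?thesis using False by (auto simp: v_def dW_simps)
      qed
    qed
  qed
  then have "v = h" using minimal_eq[OF h vG] by blast
  then show ?thesis unfolding isW_def v_def using j by (metis)
qed

lemma G3:
  assumes h: "h \<in> GR k"
  shows "isW k h \<or> isU k h \<or> isU k (\<lambda>n. - h n)"
proof -
  have hk: "h \<in> zvecs (4*k+2)" "\<And>i. i<k \<Longrightarrow> h i + h (k+i) = h (4*k) \<and> h (2*k+i) + h (3*k+i) = h (4*k+1)"
      "h (4*k) + h (4*k+1) = 0"
    using Gr_ker[OF h] unfolding intker_iff by auto
  consider "h (4*k) > 0" | "h (4*k) < 0" | "h (4*k) = 0" by linarith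
  then show ?thesis
  proof cases
    case 1 then show ?thesis using Gpos[OF h] by blast
  next
    case 2 then show ?thesis using Gpos[OF graver_neg[OF h]] by auto
  next
    case 3
    obtain n where n: "h n \<noteq> 0" using Gr_nz[OF h] by (auto simp: fun_eq_iff)
    then have nl: "n < 4*k+2" using hk(1) unfolding zvecs_def by (metis (mono_tags, lifting) mem_Collect_eq not_le)
    from nl show ?thesis
    proof (cases rule: coord_cases[of n k])
      case (x i) then show ?thesis using Wcase[OF h, of i] hk(2)[of i] 3 n by (auto simp: add.commute)
    next
      case (y i) then show ?thesis using Wcase[OF h, of i] hk(2)[of i] 3 n by (auto simp: add.commute)
    next
      case (z i)
      have e: "2*k+i+k = 3*k+i" by simp
      show ?thesis using Wcase[OF h, of "2*k+i"] hk(2)[of i] hk(3) 3 n z unfolding e by auto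
    next
      case (w i)
      have e: "2*k+i+k = 3*k+i" by simp
      show ?thesis using Wcase[OF h, of "2*k+i"] hk(2)[of i] hk(3) 3 n w unfolding e by auto
    next
      case p then show ?thesis using 3 n by simp
    next
      case q then show ?thesis using 3 n hk(3) by simp
    qed
  qed
qed


abbreviation "FF k b \<equiv> fiber (2*k+1) (4*k+2) (Ak k) b"

lemma F_finite: "finite (FF k b)"
proof -
  define M where "M = (\<Sum>i<2*k+1. \<bar>b i\<bar>)"
  have two: "\<And>i j. i < 2*k+1 \<Longrightarrow> j < 2*k+1 \<Longrightarrow> i \<noteq> j \<Longrightarrow> \<bar>b i\<bar> + \<bar>b j\<bar> \<le> M"
  proof -
    fix i j :: nat assume "i < 2*k+1" "j < 2*k+1" "i \<noteq> j"
    then have "(\<Sum>n\<in>{i,j}. \<bar>b n\<bar>) \<le> (\<Sum>n<2*k+1. \<bar>b n\<bar>)"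
      by (intro sum_mono2) auto
    then show "\<bar>b i\<bar> + \<bar>b j\<bar> \<le> M" using \<open>i \<noteq> j\<close> by (simp add: M_def)
  qed
  have one: "\<bar>b (2*k)\<bar> \<le> M"
    unfolding M_def by (rule member_le_sum) auto
  have sub: "FF k b \<subseteq> {f. \<forall>x. (x \<in> {..<4*k+2} \<longrightarrow> f x \<in> {0..M}) \<and> (x \<notin> {..<4*k+2} \<longrightarrow> f x = 0)}"
  proof
    fix v assume v: "v \<in> FF k b"
    have vv: "v \<in> zvecs (4*k+2)" "\<And>n. v n \<ge> 0"
      "\<And>i. i<k \<Longrightarrow> v i + v (k+i) - v (4*k) = b i \<and> v (2*k+i) + v (3*k+i) - v (4*k+1) = b (k+i)"
      "v (4*k) + v (4*k+1) = b (2*k)"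
      using v unfolding fiber_iff by auto
    have "\<And>n. n < 4*k+2 \<Longrightarrow> v n \<le> M"
    proof -
      fix n assume n: "n < 4*k+2"
      then show "v n \<le> M"
      proof (cases rule: coord_cases[of n k])
        case (x i) then show ?thesis using vv(2)[of "k+i"] vv(2)[of "4*k+1"] vv(3)[of i] vv(4) two[of i "2*k"] by auto
      next
        case (y i) then show ?thesis using vv(2)[of i] vv(2)[of "4*k+1"] vv(3)[of i] vv(4) two[of i "2*k"] by auto
      next
        case (z i) then show ?thesis using vv(2)[of "3*k+i"] vv(2)[of "4*k"] vv(3)[of i] vv(4) two[of "k+i" "2*k"] by auto
      next
        case (w i) then show ?thesis using vv(2)[of "2*k+i"] vv(2)[of "4*k"] vv(3)[of i] vv(4) two[of "k+i" "2*k"] by auto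
      next
        case p then show ?thesis using vv(2)[of "4*k+1"] vv(4) one by auto
      next
        case q then show ?thesis using vv(2)[of "4*k"] vv(4) one by auto
      qed
    qed
    then show "v \<in> {f. \<forall>x. (x \<in> {..<4*k+2} \<longrightarrow> f x \<in> {0..M}) \<and> (x \<notin> {..<4*k+2} \<longrightarrow> f x = 0)}"
      using vv(1,2) by (auto simp: zvecs_def)
  qed
  show ?thesis
    by (rule finite_subset[OF sub finite_set_of_finite_funs]) auto
qed

lemma fadj_sym: "fadj F M u v \<Longrightarrow> fadj F M v u"
  unfolding fadj_def by auto

lemma card_pow_bound:
  assumes "inj_on f S" "f ` S \<subseteq> Pow {..<k}"
  shows "card S \<le> 2^k"
proof -
  have "card S \<le> card (Pow {..<(k::nat)})"
    using card_inj_on_le[OF assms(1) assms(2)] by simp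
  then show ?thesis by (simp add: card_Pow)
qed


lemma nb_cases:
  assumes "fadj (FF k b) (GR k) c v"
  shows "isW k (\<lambda>n. v n - c n) \<or> isU k (\<lambda>n. v n - c n) \<or> isU k (\<lambda>n. c n - v n)"
proof -
  have "(\<lambda>n. c n - v n) \<in> GR k \<or> (\<lambda>n. v n - c n) \<in> GR k" using assms unfolding fadj_def by auto
  then show ?thesis
  proof
    assume a: "(\<lambda>n. c n - v n) \<in> GR k"
    have e: "(\<lambda>n. - (c n - v n)) = (\<lambda>n. v n - c n)" by auto
    from G3[OF a] have "isW k (\<lambda>n. c n - v n) \<or> isU k (\<lambda>n. v n - c n) \<or> isU k (\<lambda>n. c n - v n)"
      unfolding e by blast
    moreover have "isW k (\<lambda>n. c n - v n) \<Longrightarrow> isW k (\<lambda>n. v n - c n)"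
    proof -
      assume "isW k (\<lambda>n. c n - v n)"
      then obtain j where j: "j < k \<or> (2*k \<le> j \<and> j < 3*k)" and
        d: "(\<lambda>n. c n - v n) = dW k j \<or> (\<lambda>n. c n - v n) = (\<lambda>n. - dW k j n)"
        unfolding isW_def by blast
      from d have "(\<lambda>n. v n - c n) = (\<lambda>n. - dW k j n) \<or> (\<lambda>n. v n - c n) = dW k j"
      proof
        assume e: "(\<lambda>n. c n - v n) = dW k j"
        have "(\<lambda>n. v n - c n) = (\<lambda>n. - dW k j n)"
        proof (rule ext)
          fix n from fun_cong[OF e, of n] show "v n - c n = - dW k j n" by simp
        qed
        then show ?thesis by blast
      next
        assume e: "(\<lambda>n. c n - v n) = (\<lambda>n. - dW k j n)"
        have "(\<lambda>n. v n - c n) = dW k j"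
        proof (rule ext)
          fix n from fun_cong[OF e, of n] show "v n - c n = dW k j n" by simp
        qed
        then show ?thesis by blast
      qed
      then show ?thesis unfolding isW_def using j by blast
    qed
    ultimately show ?thesis by blast
  next
    assume a: "(\<lambda>n. v n - c n) \<in> GR k"
    have e: "(\<lambda>n. - (v n - c n)) = (\<lambda>n. c n - v n)" by auto
    from G3[OF a] show ?thesis unfolding e by blast
  qed
qed

lemma deg_corner:
  assumes c: "c \<in> FF k b" and cz: "\<And>i. i<k \<Longrightarrow> c i = 0 \<and> c (2*k+i) = 0"
    and nd: "(c (4*k) = 0 \<or> (\<exists>i<k. c (k+i) = 0)) \<or> (c (4*k+1) = 0 \<or> (\<exists>i<k. c (3*k+i) = 0))"
  shows "gdegree (FF k b) (GR k) c \<le> card {i. i<k \<and> c (k+i) > 0} + card {i. i<k \<and> c (3*k+i) > 0} + 2^k"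
proof -
  let ?F = "FF k b"
  let ?N = "{v. fadj ?F (GR k) c v}"
  have cc: "c \<in> zvecs (4*k+2)" "\<And>n. c n \<ge> 0" using c unfolding fiber_iff by auto
  define J where "J = {i. i<k \<and> c (k+i) > 0} \<union> {j. 2*k \<le> j \<and> j < 3*k \<and> c (j+k) > 0}"
  define W where "W = (\<lambda>j. \<lambda>n. c n + dW k j n) ` J"
  define U where "U = {v \<in> ?N. isU k (\<lambda>n. v n - c n)}"
  define D where "D = {v \<in> ?N. isU k (\<lambda>n. c n - v n)}"
  have Nsub: "?N \<subseteq> W \<union> U \<union> D"
  proof
    fix v assume v: "v \<in> ?N"
    then have vF: "v \<in> ?F" unfolding fadj_def by auto
    then have vnn: "\<And>n. v n \<ge> 0" unfolding fiber_iff by auto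
    from v have "isW k (\<lambda>n. v n - c n) \<or> isU k (\<lambda>n. v n - c n) \<or> isU k (\<lambda>n. c n - v n)"
      using nb_cases by blast
    then show "v \<in> W \<union> U \<union> D"
    proof (elim disjE)
      assume "isW k (\<lambda>n. v n - c n)"
      then obtain j where j: "j < k \<or> (2*k \<le> j \<and> j < 3*k)" and
        d: "(\<lambda>n. v n - c n) = dW k j \<or> (\<lambda>n. v n - c n) = (\<lambda>n. - dW k j n)"
        unfolding isW_def by blast
      have kpos: "0 < k" using j by linarith
      have cj: "c j = 0"
      proof (cases "j < k")
        case True then show ?thesis using cz by auto
      next
        case False
        then obtain i where "i<k" "j = 2*k+i" using j by (intro that[of "j - 2*k"]) auto
        then show ?thesis using cz by auto
      qed
      have dd: "(\<lambda>n. v n - c n) = dW k j"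
      proof (rule ccontr)
        assume "(\<lambda>n. v n - c n) \<noteq> dW k j"
        then have "(\<lambda>n. v n - c n) = (\<lambda>n. - dW k j n)" using d by blast
        from fun_cong[OF this, of j] have "v j - c j = - dW k j j" by simp
        then show False using cj vnn[of j] by (simp add: dW_simps)
      qed
      from fun_cong[OF dd, of "j+k"] have "v (j+k) - c (j+k) = dW k j (j+k)" by simp
      then have "c (j+k) > 0" using vnn[of "j+k"] kpos by (simp add: dW_simps)
      then have "j \<in> J" unfolding J_def using j by (auto simp: add.commute)
      moreover have "v = (\<lambda>n. c n + dW k j n)"
      proof (rule ext)
        fix n from fun_cong[OF dd, of n] show "v n = c n + dW k j n" by simp
      qed
      ultimately show ?thesis unfolding W_def by blast
    qed (use v in \<open>auto simp: U_def D_def\<close>)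
  qed
  have Ffin: "finite ?F" by (rule F_finite)
  have UF: "U \<subseteq> ?F" "D \<subseteq> ?F" unfolding U_def D_def fadj_def by auto
  have finW: "finite W" unfolding W_def J_def by auto
  have cardJ: "card J \<le> card {i. i<k \<and> c (k+i) > 0} + card {i. i<k \<and> c (3*k+i) > 0}"
  proof -
    have e: "{j. 2*k \<le> j \<and> j < 3*k \<and> c (j+k) > 0} = (\<lambda>i. 2*k+i) ` {i. i<k \<and> c (3*k+i) > 0}"
    proof (rule set_eqI, rule iffI)
      fix j assume "j \<in> {j. 2*k \<le> j \<and> j < 3*k \<and> c (j+k) > 0}"
      then show "j \<in> (\<lambda>i. 2*k+i) ` {i. i<k \<and> c (3*k+i) > 0}"
        by (intro image_eqI[of _ _ "j - 2*k"]) (auto simp: algebra_simps)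
    next
      fix j assume "j \<in> (\<lambda>i. 2*k+i) ` {i. i<k \<and> c (3*k+i) > 0}"
      then show "j \<in> {j. 2*k \<le> j \<and> j < 3*k \<and> c (j+k) > 0}" by (auto simp: algebra_simps)
    qed
    have "card J \<le> card {i. i<k \<and> c (k+i) > 0} + card {j. 2*k \<le> j \<and> j < 3*k \<and> c (j+k) > 0}"
      unfolding J_def by (rule card_Un_le)
    also have "card {j. 2*k \<le> j \<and> j < 3*k \<and> c (j+k) > 0} = card {i. i<k \<and> c (3*k+i) > 0}"
      unfolding e by (rule card_image) (auto simp: inj_on_def)
    finally show ?thesis .
  qed
  have cardW: "card W \<le> card J" unfolding W_def by (rule card_image_le) (auto simp: J_def)
  have cardU: "card U \<le> 2^k"
  proof (rule card_pow_bound[of "\<lambda>v. {i. i<k \<and> v i \<noteq> c i}"])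
    show "(\<lambda>v. {i. i<k \<and> v i \<noteq> c i}) ` U \<subseteq> Pow {..<k}" by auto
    show "inj_on (\<lambda>v. {i. i<k \<and> v i \<noteq> c i}) U"
    proof (rule inj_onI)
      fix v v' assume v: "v \<in> U" and v': "v' \<in> U" and eq: "{i. i<k \<and> v i \<noteq> c i} = {i. i<k \<and> v' i \<noteq> c i}"
      have vF: "v \<in> ?F" "v' \<in> ?F" using v v' UF by auto
      have vz: "v \<in> zvecs (4*k+2)" "v' \<in> zvecs (4*k+2)" "\<And>n. v n \<ge> 0" "\<And>n. v' n \<ge> 0"
        using vF unfolding fiber_iff by auto
      have U1: "isU k (\<lambda>n. v n - c n)" "isU k (\<lambda>n. v' n - c n)" using v v' unfolding U_def by auto
      have A: "\<And>i. i<k \<Longrightarrow> ((v i - c i = 1 \<and> v (k+i) - c (k+i) = 0) \<or> (v i - c i = 0 \<and> v (k+i) - c (k+i) = 1)) \<and>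
            ((v (2*k+i) - c (2*k+i) = -1 \<and> v (3*k+i) - c (3*k+i) = 0) \<or> (v (2*k+i) - c (2*k+i) = 0 \<and> v (3*k+i) - c (3*k+i) = -1))"
        "v (4*k) - c (4*k) = 1" "v (4*k+1) - c (4*k+1) = -1"
        using U1(1) unfolding isU_def by auto
      have B: "\<And>i. i<k \<Longrightarrow> ((v' i - c i = 1 \<and> v' (k+i) - c (k+i) = 0) \<or> (v' i - c i = 0 \<and> v' (k+i) - c (k+i) = 1)) \<and>
            ((v' (2*k+i) - c (2*k+i) = -1 \<and> v' (3*k+i) - c (3*k+i) = 0) \<or> (v' (2*k+i) - c (2*k+i) = 0 \<and> v' (3*k+i) - c (3*k+i) = -1))"
        "v' (4*k) - c (4*k) = 1" "v' (4*k+1) - c (4*k+1) = -1"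
        using U1(2) unfolding isU_def by auto
      show "v = v'"
      proof (rule vec_eqI[OF vz(1,2)])
        fix i assume i: "i<k"
        have "(v i \<noteq> c i) = (v' i \<noteq> c i)" using eq i by blast
        then show "v i = v' i \<and> v (k + i) = v' (k + i) \<and> v (2 * k + i) = v' (2 * k + i) \<and> v (3 * k + i) = v' (3 * k + i)"
          using A(1)[OF i] B(1)[OF i] cz[OF i] vz(3)[of "2*k+i"] vz(4)[of "2*k+i"] by auto
      qed (use A B in auto)
    qed
  qed
  have cardD: "card D \<le> 2^k"
  proof (rule card_pow_bound[of "\<lambda>v. {i. i<k \<and> v (2*k+i) \<noteq> c (2*k+i)}"])
    show "(\<lambda>v. {i. i<k \<and> v (2*k+i) \<noteq> c (2*k+i)}) ` D \<subseteq> Pow {..<k}" by auto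
    show "inj_on (\<lambda>v. {i. i<k \<and> v (2*k+i) \<noteq> c (2*k+i)}) D"
    proof (rule inj_onI)
      fix v v' assume v: "v \<in> D" and v': "v' \<in> D" and eq: "{i. i<k \<and> v (2*k+i) \<noteq> c (2*k+i)} = {i. i<k \<and> v' (2*k+i) \<noteq> c (2*k+i)}"
      have vF: "v \<in> ?F" "v' \<in> ?F" using v v' UF by auto
      have vz: "v \<in> zvecs (4*k+2)" "v' \<in> zvecs (4*k+2)" "\<And>n. v n \<ge> 0" "\<And>n. v' n \<ge> 0"
        using vF unfolding fiber_iff by auto
      have U1: "isU k (\<lambda>n. c n - v n)" "isU k (\<lambda>n. c n - v' n)" using v v' unfolding D_def by auto
      have A: "\<And>i. i<k \<Longrightarrow> ((c i - v i = 1 \<and> c (k+i) - v (k+i) = 0) \<or> (c i - v i = 0 \<and> c (k+i) - v (k+i) = 1)) \<and>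
            ((c (2*k+i) - v (2*k+i) = -1 \<and> c (3*k+i) - v (3*k+i) = 0) \<or> (c (2*k+i) - v (2*k+i) = 0 \<and> c (3*k+i) - v (3*k+i) = -1))"
        "c (4*k) - v (4*k) = 1" "c (4*k+1) - v (4*k+1) = -1"
        using U1(1) unfolding isU_def by auto
      have B: "\<And>i. i<k \<Longrightarrow> ((c i - v' i = 1 \<and> c (k+i) - v' (k+i) = 0) \<or> (c i - v' i = 0 \<and> c (k+i) - v' (k+i) = 1)) \<and>
            ((c (2*k+i) - v' (2*k+i) = -1 \<and> c (3*k+i) - v' (3*k+i) = 0) \<or> (c (2*k+i) - v' (2*k+i) = 0 \<and> c (3*k+i) - v' (3*k+i) = -1))"
        "c (4*k) - v' (4*k) = 1" "c (4*k+1) - v' (4*k+1) = -1"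
        using U1(2) unfolding isU_def by auto
      show "v = v'"
      proof (rule vec_eqI[OF vz(1,2)])
        fix i assume i: "i<k"
        have "(v (2*k+i) \<noteq> c (2*k+i)) = (v' (2*k+i) \<noteq> c (2*k+i))" using eq i by blast
        then show "v i = v' i \<and> v (k + i) = v' (k + i) \<and> v (2 * k + i) = v' (2 * k + i) \<and> v (3 * k + i) = v' (3 * k + i)"
          using A(1)[OF i] B(1)[OF i] cz[OF i] vz(3)[of i] vz(4)[of i] by auto
      qed (use A B in auto)
    qed
  qed
  have UD: "card (U \<union> D) \<le> 2^k"
  proof -
    from nd show ?thesis
    proof
      assume a: "c (4*k) = 0 \<or> (\<exists>i<k. c (k+i) = 0)"
      have "D = {}"
      proof (rule ccontr)
        assume "D \<noteq> {}"
        then obtain v where v: "v \<in> D" by auto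
        have "v \<in> ?F" using v UF by auto
        then have vnn: "\<And>n. v n \<ge> 0" unfolding fiber_iff by auto
        have iu: "isU k (\<lambda>n. c n - v n)" using v unfolding D_def by auto
        from a show False
        proof
          assume "c (4*k) = 0" then show False using iu vnn[of "4*k"] unfolding isU_def by auto
        next
          assume "\<exists>i<k. c (k+i) = 0"
          then obtain i where i: "i<k" "c (k+i) = 0" by auto
          then show False using iu vnn[of i] vnn[of "k+i"] cz[OF i(1)] unfolding isU_def by force
        qed
      qed
      then show ?thesis using cardU by simp
    next
      assume a: "c (4*k+1) = 0 \<or> (\<exists>i<k. c (3*k+i) = 0)"
      have "U = {}"
      proof (rule ccontr)
        assume "U \<noteq> {}"
        then obtain v where v: "v \<in> U" by auto
        have "v \<in> ?F" using v UF by auto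
        then have vnn: "\<And>n. v n \<ge> 0" unfolding fiber_iff by auto
        have iu: "isU k (\<lambda>n. v n - c n)" using v unfolding U_def by auto
        from a show False
        proof
          assume "c (4*k+1) = 0" then show False using iu vnn[of "4*k+1"] unfolding isU_def by auto
        next
          assume "\<exists>i<k. c (3*k+i) = 0"
          then obtain i where i: "i<k" "c (3*k+i) = 0" by auto
          then show False using iu vnn[of "2*k+i"] vnn[of "3*k+i"] cz[OF i(1)] unfolding isU_def by force
        qed
      qed
      then show ?thesis using cardD by simp
    qed
  qed
  have "gdegree ?F (GR k) c = card ?N" unfolding gdegree_def by simp
  also have "\<dots> \<le> card (W \<union> (U \<union> D))"
    by (rule card_mono) (use Nsub finW UF Ffin finite_subset in auto)
  also have "\<dots> \<le> card W + card (U \<union> D)" by (rule card_Un_le)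
  finally show ?thesis using cardW cardJ UD by linarith
qed


lemma mindeg_le:
  assumes "c \<in> FF k b" shows "min_degree (FF k b) (GR k) \<le> gdegree (FF k b) (GR k) c"
  unfolding min_degree_def using assms F_finite by (intro Min_le) auto

lemma delta_low:
  assumes v: "v \<in> FF k b"
  shows "min_degree (FF k b) (GR k) \<le> card {i. i<k \<and> v i + v (k+i) > 0} + k + 2^k"
proof -
  have vv: "v \<in> zvecs (4*k+2)" "\<And>n. v n \<ge> 0"
      "\<And>i. i<k \<Longrightarrow> v i + v (k+i) - v (4*k) = b i \<and> v (2*k+i) + v (3*k+i) - v (4*k+1) = b (k+i)"
      "v (4*k) + v (4*k+1) = b (2*k)"
    using v unfolding fiber_iff by auto
  define S where "S = insert (v (4*k)) ((\<lambda>i. v i + v (k+i)) ` {..<k})"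
  define m where "m = Min S"
  have Sf: "finite S" "S \<noteq> {}" unfolding S_def by auto
  have m1: "m \<le> v (4*k)" "\<And>i. i<k \<Longrightarrow> m \<le> v i + v (k+i)" unfolding m_def S_def by auto
  have m0: "m \<ge> 0"
  proof -
    have "m \<in> S" unfolding m_def using Sf by (rule Min_in)
    then show ?thesis unfolding S_def using vv(2) by (auto intro: add_nonneg_nonneg)
  qed
  have mcase: "m = v (4*k) \<or> (\<exists>j<k. m = v j + v (k+j))"
  proof -
    have "m \<in> S" unfolding m_def using Sf by (rule Min_in)
    then show ?thesis unfolding S_def by auto
  qed
  define c where "c = (\<lambda>n. if n < k then 0 else if n < 2*k then v (n-k) + v n - m
      else if n < 3*k then 0 else if n < 4*k then v (n-k) + v n + m
      else if n = 4*k then v (4*k) - m else if n = 4*k+1 then v (4*k+1) + m else 0)"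
  have c1: "\<And>i. i<k \<Longrightarrow> c i = 0" "\<And>i. i<k \<Longrightarrow> c (k+i) = v i + v (k+i) - m"
    "\<And>i. i<k \<Longrightarrow> c (2*k+i) = 0" "\<And>i. i<k \<Longrightarrow> c (3*k+i) = v (2*k+i) + v (3*k+i) + m"
    "c (4*k) = v (4*k) - m" "c (4*k+1) = v (4*k+1) + m" "\<And>n. n \<ge> 4*k+2 \<Longrightarrow> c n = 0"
    by (auto simp: c_def)
  have cF: "c \<in> FF k b"
    unfolding fiber_iff
  proof (intro conjI allI impI)
    show "c \<in> zvecs (4*k+2)" using c1(7) by (simp add: zvecs_def)
    fix n show "c n \<ge> 0"
    proof (cases "n < 4*k+2")
      case True then show ?thesis
        by (cases rule: coord_cases[of n k]) (use c1 m1 m0 vv(2) in auto)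
    next
      case False then show ?thesis using c1(7) by simp
    qed
  next
    fix i assume i: "i<k"
    show "c i + c (k+i) - c (4*k) = b i" using c1 vv(3)[OF i] i by simp
    show "c (2*k+i) + c (3*k+i) - c (4*k+1) = b (k+i)" using c1 vv(3)[OF i] i by simp
  next
    show "c (4*k) + c (4*k+1) = b (2*k)" using c1 vv(4) by simp
  qed
  have "gdegree (FF k b) (GR k) c \<le> card {i. i<k \<and> c (k+i) > 0} + card {i. i<k \<and> c (3*k+i) > 0} + 2^k"
  proof (rule deg_corner[OF cF])
    show "\<And>i. i<k \<Longrightarrow> c i = 0 \<and> c (2*k+i) = 0" using c1 by auto
    show "(c (4*k) = 0 \<or> (\<exists>i<k. c (k+i) = 0)) \<or> (c (4*k+1) = 0 \<or> (\<exists>i<k. c (3*k+i) = 0))"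
      using mcase c1 by auto
  qed
  also have "card {i. i<k \<and> c (k+i) > 0} \<le> card {i. i<k \<and> v i + v (k+i) > 0}"
    by (rule card_mono) (use c1(2) m0 in auto)
  also have "card {i. i<k \<and> c (3*k+i) > 0} \<le> k"
  proof -
    have "card {i. i<k \<and> c (3*k+i) > 0} \<le> card {..<k}" by (rule card_mono) auto
    then show ?thesis by simp
  qed
  finally show ?thesis using mindeg_le[OF cF] by linarith
qed

lemma delta_high:
  assumes v: "v \<in> FF k b"
  shows "min_degree (FF k b) (GR k) \<le> k + card {i. i<k \<and> v (2*k+i) + v (3*k+i) > 0} + 2^k"
proof -
  have vv: "v \<in> zvecs (4*k+2)" "\<And>n. v n \<ge> 0"
      "\<And>i. i<k \<Longrightarrow> v i + v (k+i) - v (4*k) = b i \<and> v (2*k+i) + v (3*k+i) - v (4*k+1) = b (k+i)"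
      "v (4*k) + v (4*k+1) = b (2*k)"
    using v unfolding fiber_iff by auto
  define S where "S = insert (v (4*k+1)) ((\<lambda>i. v (2*k+i) + v (3*k+i)) ` {..<k})"
  define m where "m = Min S"
  have Sf: "finite S" "S \<noteq> {}" unfolding S_def by auto
  have m1: "m \<le> v (4*k+1)" "\<And>i. i<k \<Longrightarrow> m \<le> v (2*k+i) + v (3*k+i)" unfolding m_def S_def by auto
  have m0: "m \<ge> 0"
  proof -
    have "m \<in> S" unfolding m_def using Sf by (rule Min_in)
    then show ?thesis unfolding S_def using vv(2) by (auto intro: add_nonneg_nonneg)
  qed
  have mcase: "m = v (4*k+1) \<or> (\<exists>j<k. m = v (2*k+j) + v (3*k+j))"
  proof -
    have "m \<in> S" unfolding m_def using Sf by (rule Min_in)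
    then show ?thesis unfolding S_def by auto
  qed
  define c where "c = (\<lambda>n. if n < k then 0 else if n < 2*k then v (n-k) + v n + m
      else if n < 3*k then 0 else if n < 4*k then v (n-k) + v n - m
      else if n = 4*k then v (4*k) + m else if n = 4*k+1 then v (4*k+1) - m else 0)"
  have c1: "\<And>i. i<k \<Longrightarrow> c i = 0" "\<And>i. i<k \<Longrightarrow> c (k+i) = v i + v (k+i) + m"
    "\<And>i. i<k \<Longrightarrow> c (2*k+i) = 0" "\<And>i. i<k \<Longrightarrow> c (3*k+i) = v (2*k+i) + v (3*k+i) - m"
    "c (4*k) = v (4*k) + m" "c (4*k+1) = v (4*k+1) - m" "\<And>n. n \<ge> 4*k+2 \<Longrightarrow> c n = 0"
    by (auto simp: c_def)
  have cF: "c \<in> FF k b"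
    unfolding fiber_iff
  proof (intro conjI allI impI)
    show "c \<in> zvecs (4*k+2)" using c1(7) by (simp add: zvecs_def)
    fix n show "c n \<ge> 0"
    proof (cases "n < 4*k+2")
      case True then show ?thesis
        by (cases rule: coord_cases[of n k]) (use c1 m1 m0 vv(2) in auto)
    next
      case False then show ?thesis using c1(7) by simp
    qed
  next
    fix i assume i: "i<k"
    show "c i + c (k+i) - c (4*k) = b i" using c1 vv(3)[OF i] i by simp
    show "c (2*k+i) + c (3*k+i) - c (4*k+1) = b (k+i)" using c1 vv(3)[OF i] i by simp
  next
    show "c (4*k) + c (4*k+1) = b (2*k)" using c1 vv(4) by simp
  qed
  have "gdegree (FF k b) (GR k) c \<le> card {i. i<k \<and> c (k+i) > 0} + card {i. i<k \<and> c (3*k+i) > 0} + 2^k"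
  proof (rule deg_corner[OF cF])
    show "\<And>i. i<k \<Longrightarrow> c i = 0 \<and> c (2*k+i) = 0" using c1 by auto
    show "(c (4*k) = 0 \<or> (\<exists>i<k. c (k+i) = 0)) \<or> (c (4*k+1) = 0 \<or> (\<exists>i<k. c (3*k+i) = 0))"
      using mcase c1 by auto
  qed
  also have "card {i. i<k \<and> c (3*k+i) > 0} \<le> card {i. i<k \<and> v (2*k+i) + v (3*k+i) > 0}"
    by (rule card_mono) (use c1(4) m0 in auto)
  also have "card {i. i<k \<and> c (k+i) > 0} \<le> k"
  proof -
    have "card {i. i<k \<and> c (k+i) > 0} \<le> card {..<k}" by (rule card_mono) auto
    then show ?thesis by simp
  qed
  finally show ?thesis using mindeg_le[OF cF] by linarith
qed


definition mk :: "nat \<Rightarrow> (nat\<Rightarrow>int) \<Rightarrow> (nat \<Rightarrow> bool) \<Rightarrow> (nat \<Rightarrow> bool) \<Rightarrow> int \<Rightarrow> (nat \<Rightarrow> int) \<Rightarrow> (nat \<Rightarrow> int) \<Rightarrow> nat \<Rightarrow> int" where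
  "mk k u sx sz t dx dz = (\<lambda>n. if n < k then u n + (if sx n then dx n else t - dx n)
     else if n < 2*k then u n + (if sx (n-k) then t - dx (n-k) else dx (n-k))
     else if n < 3*k then u n + (if sz (n-2*k) then dz (n-2*k) else - t - dz (n-2*k))
     else if n < 4*k then u n + (if sz (n-3*k) then - t - dz (n-3*k) else dz (n-3*k))
     else if n = 4*k then u n + t else if n = 4*k+1 then u n - t else u n)"

lemma mk_x: "i < k \<Longrightarrow> mk k u sx sz t dx dz i = u i + (if sx i then dx i else t - dx i)"
  by (simp add: mk_def)
lemma mk_y: "i < k \<Longrightarrow> mk k u sx sz t dx dz (k+i) = u (k+i) + (if sx i then t - dx i else dx i)"
  by (simp add: mk_def)
lemma mk_z: "i < k \<Longrightarrow> mk k u sx sz t dx dz (2*k+i) = u (2*k+i) + (if sz i then dz i else - t - dz i)"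
  by (simp add: mk_def)
lemma mk_w: "i < k \<Longrightarrow> mk k u sx sz t dx dz (3*k+i) = u (3*k+i) + (if sz i then - t - dz i else dz i)"
proof -
  assume "i<k"
  moreover have "3*k+i-3*k = i" by simp
  ultimately show ?thesis by (simp add: mk_def)
qed
lemma mk_p: "mk k u sx sz t dx dz (4*k) = u (4*k) + t" by (simp add: mk_def)
lemma mk_q: "mk k u sx sz t dx dz (4*k+1) = u (4*k+1) - t" by (simp add: mk_def)
lemma mk_q': "mk k u sx sz t dx dz (Suc (4*k)) = u (Suc (4*k)) - t" by (simp add: mk_def)
lemma mk_out: "n \<ge> 4*k+2 \<Longrightarrow> mk k u sx sz t dx dz n = u n" by (simp add: mk_def)

lemmas mk_simps = mk_x mk_y mk_z mk_w mk_p mk_q mk_q'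

lemma mk_F:
  assumes u: "u \<in> FF k b"
    and c: "\<And>i. i<k \<Longrightarrow> 0 \<le> u i + (if sx i then dx i else t - dx i) \<and> 0 \<le> u (k+i) + (if sx i then t - dx i else dx i)
       \<and> 0 \<le> u (2*k+i) + (if sz i then dz i else - t - dz i) \<and> 0 \<le> u (3*k+i) + (if sz i then - t - dz i else dz i)"
    and p: "0 \<le> u (4*k) + t" "0 \<le> u (4*k+1) - t"
  shows "mk k u sx sz t dx dz \<in> FF k b"
proof -
  have uu: "u \<in> zvecs (4*k+2)" "\<And>n. u n \<ge> 0"
      "\<And>i. i<k \<Longrightarrow> u i + u (k+i) - u (4*k) = b i \<and> u (2*k+i) + u (3*k+i) - u (4*k+1) = b (k+i)"
      "u (4*k) + u (4*k+1) = b (2*k)"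
    using u unfolding fiber_iff by auto
  let ?v = "mk k u sx sz t dx dz"
  show ?thesis unfolding fiber_iff
  proof (intro conjI allI impI)
    show "?v \<in> zvecs (4*k+2)" using uu(1) by (simp add: zvecs_def mk_out)
    fix n show "0 \<le> ?v n"
    proof (cases "n < 4*k+2")
      case True then show ?thesis
        by (cases rule: coord_cases[of n k]) (use c p in \<open>auto simp: mk_simps\<close>)
    next
      case False then show ?thesis using uu(2) by (simp add: mk_out)
    qed
  next
    fix i assume i: "i<k"
    show "?v i + ?v (k+i) - ?v (4*k) = b i" using uu(3)[OF i] i by (auto simp: mk_simps)
    show "?v (2*k+i) + ?v (3*k+i) - ?v (4*k+1) = b (k+i)" using uu(3)[OF i] i by (auto simp: mk_simps)
  next
    show "?v (4*k) + ?v (4*k+1) = b (2*k)" using uu(4) by (simp add: mk_simps)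
  qed
qed

lemma diff_eqI:
  fixes k :: nat and A B :: "nat \<Rightarrow> int"
  assumes "\<And>i. i < k \<Longrightarrow> A i = B i \<and> A (k+i) = B (k+i) \<and> A (2*k+i) = B (2*k+i) \<and> A (3*k+i) = B (3*k+i)"
    and "A (4*k) = B (4*k)" "A (4*k+1) = B (4*k+1)" "\<And>n. n \<ge> 4*k+2 \<Longrightarrow> A n = B n"
  shows "A = B"
proof
  fix n show "A n = B n"
  proof (cases "n < 4*k+2")
    case True then show ?thesis
      by (cases rule: coord_cases[of n k]) (use assms in auto)
  next
    case False then show ?thesis using assms(4) by simp
  qed
qed

lemma stepX:
  assumes A: "mk k u sx sz t dx dz \<in> FF k b" and B: "mk k u sx sz t dx' dz \<in> FF k b"
    and j: "j < k" and d1: "dx' j = dx j + 1" and d2: "\<And>i. i<k \<Longrightarrow> i \<noteq> j \<Longrightarrow> dx' i = dx i"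
  shows "fadj (FF k b) (GR k) (mk k u sx sz t dx dz) (mk k u sx sz t dx' dz)"
proof -
  let ?A = "mk k u sx sz t dx dz" and ?B = "mk k u sx sz t dx' dz"
  let ?h = "\<lambda>n. ?B n - ?A n"
  have kp: "0 < k" using j by simp
  have hW: "?h = (if sx j then dW k j else (\<lambda>n. - dW k j n))"
  proof (rule diff_eqI[where k=k])
    fix i assume i: "i<k"
    show "?h i = (if sx j then dW k j else (\<lambda>n. - dW k j n)) i \<and> ?h (k+i) = (if sx j then dW k j else (\<lambda>n. - dW k j n)) (k+i) \<and>
      ?h (2*k+i) = (if sx j then dW k j else (\<lambda>n. - dW k j n)) (2*k+i) \<and> ?h (3*k+i) = (if sx j then dW k j else (\<lambda>n. - dW k j n)) (3*k+i)"
      using i j d1 d2[OF i] by (auto simp: mk_simps dW_def)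
  qed (use j in \<open>auto simp: mk_simps mk_out dW_def\<close>)
  have "isW k ?h" unfolding isW_def using j hW by (cases "sx j") auto
  then have G: "?h \<in> GR k" by (rule G2)
  have "?h j \<noteq> 0" using fun_cong[OF hW, of j] by (cases "sx j") (simp_all add: dW_def)
  then have "?A \<noteq> ?B" by auto
  then show ?thesis unfolding fadj_def using A B G by auto
qed

lemma stepZ:
  assumes A: "mk k u sx sz t dx dz \<in> FF k b" and B: "mk k u sx sz t dx dz' \<in> FF k b"
    and j: "j < k" and d1: "dz' j = dz j + 1" and d2: "\<And>i. i<k \<Longrightarrow> i \<noteq> j \<Longrightarrow> dz' i = dz i"
  shows "fadj (FF k b) (GR k) (mk k u sx sz t dx dz) (mk k u sx sz t dx dz')"
proof -
  let ?A = "mk k u sx sz t dx dz" and ?B = "mk k u sx sz t dx dz'"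
  let ?h = "\<lambda>n. ?B n - ?A n"
  let ?j = "2*k+j"
  have e: "?j + k = 3*k+j" by simp
  have hW: "?h = (if sz j then dW k ?j else (\<lambda>n. - dW k ?j n))"
  proof (rule diff_eqI[where k=k])
    fix i assume i: "i<k"
    show "?h i = (if sz j then dW k ?j else (\<lambda>n. - dW k ?j n)) i \<and> ?h (k+i) = (if sz j then dW k ?j else (\<lambda>n. - dW k ?j n)) (k+i) \<and>
      ?h (2*k+i) = (if sz j then dW k ?j else (\<lambda>n. - dW k ?j n)) (2*k+i) \<and> ?h (3*k+i) = (if sz j then dW k ?j else (\<lambda>n. - dW k ?j n)) (3*k+i)"
      using i j d1 d2[OF i] by (auto simp: mk_simps dW_def)
  qed (use j in \<open>auto simp: mk_simps mk_out dW_def\<close>)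
  have "isW k ?h" unfolding isW_def using j hW by (intro exI[of _ "2*k+j"]) auto
  then have G: "?h \<in> GR k" by (rule G2)
  have "?h ?j \<noteq> 0" using fun_cong[OF hW, of ?j] by (cases "sz j") (simp_all add: dW_def)
  then have "?A \<noteq> ?B" by auto
  then show ?thesis unfolding fadj_def using A B G by auto
qed

lemma stepU:
  assumes A: "mk k u sx sz t dx dz \<in> FF k b" and B: "mk k u sx sz (t+1) dx' dz' \<in> FF k b"
    and d: "\<And>i. i<k \<Longrightarrow> (dx' i = dx i \<or> dx' i = dx i + 1) \<and> (dz' i = dz i \<or> dz' i = dz i - 1)"
  shows "fadj (FF k b) (GR k) (mk k u sx sz t dx dz) (mk k u sx sz (t+1) dx' dz')"
proof -
  let ?A = "mk k u sx sz t dx dz" and ?B = "mk k u sx sz (t+1) dx' dz'"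
  let ?h = "\<lambda>n. ?B n - ?A n"
  have "isU k ?h" unfolding isU_def
  proof (intro conjI allI impI)
    show "?h \<in> zvecs (4*k+2)" by (simp add: zvecs_def mk_out)
    show "?h (4*k) = 1" "?h (4*k+1) = -1" by (simp_all add: mk_simps)
  next
    fix i assume i: "i<k"
    show "?h i = 1 \<and> ?h (k + i) = 0 \<or> ?h i = 0 \<and> ?h (k + i) = 1"
      using d[OF i] i by (auto simp: mk_simps)
    show "?h (2*k+i) = -1 \<and> ?h (3*k + i) = 0 \<or> ?h (2*k+i) = 0 \<and> ?h (3*k + i) = -1"
      using d[OF i] i by (auto simp: mk_simps)
  qed
  then have G: "?h \<in> GR k" by (rule G1)
  have "?A \<noteq> ?B"
  proof
    assume "?A = ?B"
    then have "?h (4*k) = 0" by simp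
    then show False by (simp add: mk_simps)
  qed
  then show ?thesis unfolding fadj_def using A B G by auto
qed


fun chain :: "('a \<Rightarrow> 'a \<Rightarrow> bool) \<Rightarrow> 'a list \<Rightarrow> bool" where
  "chain R [] = True"
| "chain R [x] = True"
| "chain R (x # y # xs) = (R x y \<and> chain R (y # xs))"

lemma chain_nth: "chain R P \<Longrightarrow> Suc i < length P \<Longrightarrow> R (P ! i) (P ! Suc i)"
proof (induction R P arbitrary: i rule: chain.induct)
  case (3 R x y xs)
  then show ?case by (cases i) auto
qed auto

lemma path_edges_Cons2: "path_edges (x # y # xs) = insert {x, y} (path_edges (y # xs))"
proof (rule set_eqI, rule iffI)
  fix E assume "E \<in> path_edges (x # y # xs)"
  then obtain i where i: "E = {(x#y#xs) ! i, (x#y#xs) ! Suc i}" "Suc i < length (x#y#xs)"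
    unfolding path_edges_def by blast
  then show "E \<in> insert {x, y} (path_edges (y # xs))"
    by (cases i) (auto simp: path_edges_def)
next
  fix E assume "E \<in> insert {x, y} (path_edges (y # xs))"
  then show "E \<in> path_edges (x # y # xs)"
  proof
    assume "E = {x,y}" then show ?thesis unfolding path_edges_def by (intro CollectI exI[of _ 0]) auto
  next
    assume "E \<in> path_edges (y # xs)"
    then obtain i where i: "E = {(y#xs) ! i, (y#xs) ! Suc i}" "Suc i < length (y#xs)"
      unfolding path_edges_def by blast
    then show ?thesis unfolding path_edges_def by (intro CollectI exI[of _ "Suc i"]) auto
  qed
qed

lemma path_edges_single: "path_edges [x] = {}" by (simp add: path_edges_def)

lemma path_edges_sig:
  assumes "E \<in> path_edges P" shows "f ` E \<in> (\<lambda>E. f ` E) ` path_edges P"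
  using assms by blast

lemma gpath_intro:
  assumes "P \<noteq> []" "hd P = a" "last P = c" "distinct (map f P)" "set P \<subseteq> F" "chain (fadj F Mv) P"
  shows "gpath F Mv P a c"
  unfolding gpath_def using assms chain_nth distinct_map by blast

datatype pid = PA | PB "nat set" | PD nat | PE nat | PF nat | PG nat nat

definition e1 :: "nat \<Rightarrow> nat \<Rightarrow> int" where "e1 i = (\<lambda>n. if n = i then 1 else 0)"
definition ne1 :: "nat \<Rightarrow> nat \<Rightarrow> int" where "ne1 i = (\<lambda>n. if n = i then -1 else 0)"
definition ind :: "nat set \<Rightarrow> nat \<Rightarrow> int" where "ind D = (\<lambda>n. if n \<in> D then 1 else 0)"
definition z0 :: "nat \<Rightarrow> int" where "z0 = (\<lambda>_. 0)"

locale setting =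
  fixes k :: nat and b :: "nat \<Rightarrow> int" and u u' :: "nat \<Rightarrow> int"
  assumes uF: "u \<in> FF k b" and u'F: "u' \<in> FF k b" and U: "isU k (\<lambda>n. u' n - u n)"
begin

definition sx where "sx i \<longleftrightarrow> u' i = u i"
definition sz where "sz i \<longleftrightarrow> u' (2*k+i) = u (2*k+i)"
abbreviation M where "M t dx dz \<equiv> mk k u sx sz t dx dz"
definition xv where "xv i = (if sx i then u i else u (k+i))"
definition yv where "yv i = (if sx i then u (k+i) else u i)"
definition zv where "zv i = (if sz i then u (2*k+i) else u (3*k+i))"
definition wv where "wv i = (if sz i then u (3*k+i) else u (2*k+i))"
definition Xi where "Xi i = (if sx i then i else k+i)"
definition Zi where "Zi i = (if sz i then 2*k+i else 3*k+i)"

lemma uu: "u \<in> zvecs (4*k+2)" "\<And>n. u n \<ge> 0"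
      "\<And>i. i<k \<Longrightarrow> u i + u (k+i) - u (4*k) = b i \<and> u (2*k+i) + u (3*k+i) - u (4*k+1) = b (k+i)"
      "u (4*k) + u (4*k+1) = b (2*k)"
  using uF unfolding fiber_iff by auto
lemma uu': "u' \<in> zvecs (4*k+2)" "\<And>n. u' n \<ge> 0"
  using u'F unfolding fiber_iff by auto

lemma Uf: "\<And>i. i<k \<Longrightarrow> ((u' i - u i = 1 \<and> u' (k+i) - u (k+i) = 0) \<or> (u' i - u i = 0 \<and> u' (k+i) - u (k+i) = 1)) \<and>
            ((u' (2*k+i) - u (2*k+i) = -1 \<and> u' (3*k+i) - u (3*k+i) = 0) \<or> (u' (2*k+i) - u (2*k+i) = 0 \<and> u' (3*k+i) - u (3*k+i) = -1))"
  "u' (4*k) - u (4*k) = 1" "u' (4*k+1) - u (4*k+1) = -1"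
  using U unfolding isU_def by auto

lemma M0: "M 0 z0 z0 = u"
  by (rule diff_eqI[where k=k]) (auto simp: mk_simps mk_out z0_def)

lemma M1: "M 1 z0 z0 = u'"
proof (rule diff_eqI[where k=k])
  fix i assume i: "i<k"
  show "M 1 z0 z0 i = u' i \<and> M 1 z0 z0 (k + i) = u' (k + i) \<and> M 1 z0 z0 (2 * k + i) = u' (2 * k + i) \<and> M 1 z0 z0 (3 * k + i) = u' (3 * k + i)"
    using Uf(1)[OF i] i by (auto simp: mk_simps z0_def sx_def sz_def)
next
  show "M 1 z0 z0 (4*k) = u' (4*k)" "M 1 z0 z0 (4*k+1) = u' (4*k+1)" using Uf(2,3) by (simp_all add: mk_simps)
  fix n :: nat assume "n \<ge> 4*k+2"
  then show "M 1 z0 z0 n = u' n" using uu(1) uu'(1) by (simp add: mk_out zvecs_def)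
qed

lemma nn: "\<And>i. i<k \<Longrightarrow> xv i \<ge> 0 \<and> yv i \<ge> 0 \<and> zv i \<ge> 0 \<and> wv i \<ge> 1" "u (4*k) \<ge> 0" "u (4*k+1) \<ge> 1"
proof -
  fix i assume i: "i<k"
  show "xv i \<ge> 0 \<and> yv i \<ge> 0 \<and> zv i \<ge> 0 \<and> wv i \<ge> 1"
    using uu(2)[of i] uu(2)[of "k+i"] uu(2)[of "2*k+i"] uu(2)[of "3*k+i"] uu'(2)[of "2*k+i"] uu'(2)[of "3*k+i"] Uf(1)[OF i]
    by (auto simp: xv_def yv_def zv_def wv_def sz_def)
next
  show "u (4*k) \<ge> 0" using uu(2) by simp
  show "u (4*k+1) \<ge> 1" using uu'(2)[of "4*k+1"] Uf(3) by simp
qed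

lemma MF:
  assumes "\<And>i. i<k \<Longrightarrow> xv i + dx i \<ge> 0 \<and> yv i + t - dx i \<ge> 0 \<and> zv i + dz i \<ge> 0 \<and> wv i - t - dz i \<ge> 0"
    and "u (4*k) + t \<ge> 0" "u (4*k+1) - t \<ge> 0"
  shows "M t dx dz \<in> FF k b"
proof (rule mk_F[OF uF])
  fix i assume i: "i<k"
  show "0 \<le> u i + (if sx i then dx i else t - dx i) \<and> 0 \<le> u (k+i) + (if sx i then t - dx i else dx i)
       \<and> 0 \<le> u (2*k+i) + (if sz i then dz i else - t - dz i) \<and> 0 \<le> u (3*k+i) + (if sz i then - t - dz i else dz i)"
    using assms(1)[OF i] by (auto simp: xv_def yv_def zv_def wv_def)
qed (use assms in auto)

definition sig :: "(nat \<Rightarrow> int) \<Rightarrow> int \<times> int \<times> int \<times> nat set \<times> nat set" where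
  "sig v = (v (4*k) - u (4*k), (\<Sum>i<k. v (Xi i) - u (Xi i)), (\<Sum>i<k. v (Zi i) - u (Zi i)),
            {i. i<k \<and> v (Xi i) \<noteq> u (Xi i)}, {i. i<k \<and> v (Zi i) \<noteq> u (Zi i)})"

lemma M_Xi: "i < k \<Longrightarrow> M t dx dz (Xi i) = u (Xi i) + dx i"
  by (auto simp: Xi_def mk_simps)
lemma M_Zi: "i < k \<Longrightarrow> M t dx dz (Zi i) = u (Zi i) + dz i"
  by (auto simp: Zi_def mk_simps)

lemma sig_M: "sig (M t dx dz) = (t, (\<Sum>i<k. dx i), (\<Sum>i<k. dz i), {i. i<k \<and> dx i \<noteq> 0}, {i. i<k \<and> dz i \<noteq> 0})"
proof -
  have a: "(\<Sum>i<k. M t dx dz (Xi i) - u (Xi i)) = (\<Sum>i<k. dx i)" by (rule sum.cong) (auto simp: M_Xi)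
  have b: "(\<Sum>i<k. M t dx dz (Zi i) - u (Zi i)) = (\<Sum>i<k. dz i)" by (rule sum.cong) (auto simp: M_Zi)
  have c: "{i. i<k \<and> M t dx dz (Xi i) \<noteq> u (Xi i)} = {i. i<k \<and> dx i \<noteq> 0}" by (auto simp: M_Xi)
  have d: "{i. i<k \<and> M t dx dz (Zi i) \<noteq> u (Zi i)} = {i. i<k \<and> dz i \<noteq> 0}" by (auto simp: M_Zi)
  show ?thesis unfolding sig_def a b c d by (simp add: mk_simps)
qed

lemma sum_e1: "i < k \<Longrightarrow> (\<Sum>n<k. e1 i n) = 1" by (simp add: e1_def)
lemma sum_ne1: "i < k \<Longrightarrow> (\<Sum>n<k. ne1 i n) = -1" by (simp add: ne1_def)
lemma sum_z0: "(\<Sum>n<k. z0 n) = 0" by (simp add: z0_def)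
lemma sum_ind: "D \<subseteq> {..<k} \<Longrightarrow> (\<Sum>n<k. ind D n) = int (card D)"
  unfolding ind_def by (simp add: sum.If_cases Int_absorb1)
lemma supp_e1: "i < k \<Longrightarrow> {n. n<k \<and> e1 i n \<noteq> 0} = {i}" by (auto simp: e1_def)
lemma supp_ne1: "i < k \<Longrightarrow> {n. n<k \<and> ne1 i n \<noteq> 0} = {i}" by (auto simp: ne1_def)
lemma supp_z0: "{n. n<k \<and> z0 n \<noteq> 0} = {}" by (auto simp: z0_def)
lemma supp_ind: "D \<subseteq> {..<k} \<Longrightarrow> {n. n<k \<and> ind D n \<noteq> 0} = D" by (auto simp: ind_def)

lemmas sig_simps = sig_M sum_e1 sum_ne1 sum_z0 sum_ind supp_e1 supp_ne1 supp_z0 supp_ind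

end


context setting begin

abbreviation "FFk \<equiv> FF k b"
abbreviation "Gk \<equiv> GR k"

lemma sU0:
  assumes "M 0 dx dz \<in> FFk" "M 1 dx' dz' \<in> FFk"
    "\<And>i. i<k \<Longrightarrow> (dx' i = dx i \<or> dx' i = dx i + 1) \<and> (dz' i = dz i \<or> dz' i = dz i - 1)"
  shows "fadj FFk Gk (M 0 dx dz) (M 1 dx' dz')"
  using stepU[of k u sx sz 0 dx dz b dx' dz'] assms by simp

lemma sX:
  assumes "M t dx dz \<in> FFk" "M t dx' dz \<in> FFk" "j < k" "dx' j = dx j + 1" "\<And>i. i<k \<Longrightarrow> i \<noteq> j \<Longrightarrow> dx' i = dx i"
  shows "fadj FFk Gk (M t dx dz) (M t dx' dz)"
  using stepX assms by blast

lemma sZ: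
  assumes "M t dx dz \<in> FFk" "M t dx dz' \<in> FFk" "j < k" "dz' j = dz j + 1" "\<And>i. i<k \<Longrightarrow> i \<noteq> j \<Longrightarrow> dz' i = dz i"
  shows "fadj FFk Gk (M t dx dz) (M t dx dz')"
  using stepZ assms by blast

lemma MF2:
  assumes "\<And>i. i<k \<Longrightarrow> xv i \<ge> 0 \<Longrightarrow> yv i \<ge> 0 \<Longrightarrow> zv i \<ge> 0 \<Longrightarrow> wv i \<ge> 1 \<Longrightarrow>
      xv i + dx i \<ge> 0 \<and> yv i + t - dx i \<ge> 0 \<and> zv i + dz i \<ge> 0 \<and> wv i - t - dz i \<ge> 0"
    and "u (4*k) \<ge> 0 \<Longrightarrow> u (4*k) + t \<ge> 0" "u (4*k+1) \<ge> 1 \<Longrightarrow> u (4*k+1) - t \<ge> 0"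
  shows "M t dx dz \<in> FFk"
  by (rule MF) (use assms nn in auto)

definition XL where "XL = {i. i<k \<and> xv i > 0}"
definition ZL where "ZL = {i. i<k \<and> zv i > 0}"
definition PS where "PS = {i. i<k \<and> yv i > 0}"
definition QS where "QS = {i. i<k \<and> wv i > 1}"
definition pairs where "pairs = set (zip (sorted_list_of_set PS) (sorted_list_of_set QS))"

lemma pairs_in: "(i,j) \<in> pairs \<Longrightarrow> i \<in> PS \<and> j \<in> QS"
  unfolding pairs_def PS_def QS_def by (auto dest: set_zip_leftD set_zip_rightD)

definition path :: "pid \<Rightarrow> (nat \<Rightarrow> int) list" where
  "path p = (case p of PA \<Rightarrow> [M 0 z0 z0, M 1 z0 z0]
    | PB D \<Rightarrow> (if card D = 1 then [M 0 z0 z0, M 1 (ind D) z0, M 1 z0 z0]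
               else [M 0 z0 z0, M 1 (ind D) z0, M 0 z0 (ind D), M 1 z0 z0])
    | PD i \<Rightarrow> [M 0 z0 z0, M 0 z0 (e1 i), M 1 z0 z0]
    | PE i \<Rightarrow> [M 0 z0 z0, M 0 (ne1 i) z0, M 1 (ne1 i) z0, M 1 z0 z0]
    | PF i \<Rightarrow> [M 0 z0 z0, M 0 z0 (ne1 i), M 1 z0 (ne1 i), M 1 z0 z0]
    | PG i j \<Rightarrow> [M 0 z0 z0, M 0 (e1 i) z0, M 1 (e1 i) z0, M 1 (e1 i) (e1 j), M 1 z0 (e1 j), M 1 z0 z0])"

definition IDs where
  "IDs = {PA} \<union> PB ` {D. D \<subseteq> {..<k} \<and> D \<noteq> {}} \<union> PD ` {..<k} \<union> PE ` XL \<union> PF ` ZL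
         \<union> (\<lambda>(i,j). PG i j) ` pairs"

lemma F00: "M 0 z0 z0 \<in> FFk" using uF M0 by simp
lemma F10: "M 1 z0 z0 \<in> FFk" using u'F M1 by simp

lemma gp_PA: "gpath FFk Gk (path PA) u u'"
proof (rule gpath_intro[where f=sig])
  show "chain (fadj FFk Gk) (path PA)" unfolding path_def
    using sU0[OF F00 F10] by (simp add: z0_def)
  show "distinct (map sig (path PA))" unfolding path_def by (simp add: sig_simps)
qed (use uF[simplified] u'F[simplified] in \<open>auto simp: path_def M0 M1\<close>)

lemma gp_PB:
  assumes D: "D \<subseteq> {..<k}" "D \<noteq> {}"
  shows "gpath FFk Gk (path (PB D)) u u'"
proof -
  have cD: "card D \<ge> 1" using D finite_subset[OF D(1)] by (simp add: Suc_le_eq card_gt_0_iff)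
  have Fa: "M 1 (ind D) z0 \<in> FFk"
    by (rule MF2) (auto simp: ind_def z0_def)
  have Fb: "M 0 z0 (ind D) \<in> FFk"
    by (rule MF2) (auto simp: ind_def z0_def)
  have s1: "fadj FFk Gk (M 0 z0 z0) (M 1 (ind D) z0)"
    by (rule sU0[OF F00 Fa]) (auto simp: ind_def z0_def)
  have s2: "fadj FFk Gk (M 1 (ind D) z0) (M 0 z0 (ind D))"
    by (rule fadj_sym, rule sU0[OF Fb Fa]) (auto simp: ind_def z0_def)
  have s3: "fadj FFk Gk (M 0 z0 (ind D)) (M 1 z0 z0)"
    by (rule sU0[OF Fb F10]) (auto simp: ind_def z0_def)
  show ?thesis
  proof (cases "card D = 1")
    case True
    then obtain j where j: "D = {j}" by (auto simp: card_Suc_eq)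
    then have jk: "j < k" using D by auto
    have s4: "fadj FFk Gk (M 1 (ind D) z0) (M 1 z0 z0)"
      by (rule fadj_sym, rule sX[OF F10 Fa jk]) (auto simp: ind_def z0_def j)
    show ?thesis
    proof (rule gpath_intro[where f=sig])
      show "chain (fadj FFk Gk) (path (PB D))" unfolding path_def using True s1 s4 by simp
      show "distinct (map sig (path (PB D)))" unfolding path_def using True D by (simp add: sig_simps)
    qed (use True Fa uF[simplified] u'F[simplified] in \<open>auto simp: path_def M0 M1\<close>)
  next
    case False
    show ?thesis
    proof (rule gpath_intro[where f=sig])
      show "chain (fadj FFk Gk) (path (PB D))" unfolding path_def using False s1 s2 s3 by simp
      show "distinct (map sig (path (PB D)))" unfolding path_def using False D cD by (simp add: sig_simps)
    qed (use False Fa Fb uF[simplified] u'F[simplified] in \<open>auto simp: path_def M0 M1\<close>)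
  qed
qed

lemma gp_PD:
  assumes i: "i < k"
  shows "gpath FFk Gk (path (PD i)) u u'"
proof -
  have Fa: "M 0 z0 (e1 i) \<in> FFk"
    by (rule MF2) (auto simp: e1_def z0_def)
  have s1: "fadj FFk Gk (M 0 z0 z0) (M 0 z0 (e1 i))"
    by (rule sZ[OF F00 Fa i]) (auto simp: e1_def z0_def)
  have s2: "fadj FFk Gk (M 0 z0 (e1 i)) (M 1 z0 z0)"
    by (rule sU0[OF Fa F10]) (auto simp: e1_def z0_def)
  show ?thesis
  proof (rule gpath_intro[where f=sig])
    show "chain (fadj FFk Gk) (path (PD i))" unfolding path_def using s1 s2 by simp
    show "distinct (map sig (path (PD i)))" unfolding path_def using i by (simp add: sig_simps)
  qed (use Fa uF[simplified] u'F[simplified] in \<open>auto simp: path_def M0 M1\<close>)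
qed

lemma gp_PE:
  assumes i: "i \<in> XL"
  shows "gpath FFk Gk (path (PE i)) u u'"
proof -
  have ik: "i < k" "xv i > 0" using i unfolding XL_def by auto
  have Fa: "M 0 (ne1 i) z0 \<in> FFk"
    by (rule MF2) (use ik in \<open>auto simp: ne1_def z0_def\<close>)
  have Fb: "M 1 (ne1 i) z0 \<in> FFk"
    by (rule MF2) (use ik in \<open>auto simp: ne1_def z0_def\<close>)
  have s1: "fadj FFk Gk (M 0 z0 z0) (M 0 (ne1 i) z0)"
    by (rule fadj_sym, rule sX[OF Fa F00 ik(1)]) (auto simp: ne1_def z0_def)
  have s2: "fadj FFk Gk (M 0 (ne1 i) z0) (M 1 (ne1 i) z0)"
    by (rule sU0[OF Fa Fb]) (auto simp: ne1_def z0_def)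
  have s3: "fadj FFk Gk (M 1 (ne1 i) z0) (M 1 z0 z0)"
    by (rule sX[OF Fb F10 ik(1)]) (auto simp: ne1_def z0_def)
  show ?thesis
  proof (rule gpath_intro[where f=sig])
    show "chain (fadj FFk Gk) (path (PE i))" unfolding path_def using s1 s2 s3 by simp
    show "distinct (map sig (path (PE i)))" unfolding path_def using ik by (simp add: sig_simps)
  qed (use Fa Fb uF[simplified] u'F[simplified] in \<open>auto simp: path_def M0 M1\<close>)
qed

lemma gp_PF:
  assumes i: "i \<in> ZL"
  shows "gpath FFk Gk (path (PF i)) u u'"
proof -
  have ik: "i < k" "zv i > 0" using i unfolding ZL_def by auto
  have Fa: "M 0 z0 (ne1 i) \<in> FFk"
    by (rule MF2) (use ik in \<open>auto simp: ne1_def z0_def\<close>)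
  have Fb: "M 1 z0 (ne1 i) \<in> FFk"
    by (rule MF2) (use ik in \<open>auto simp: ne1_def z0_def\<close>)
  have s1: "fadj FFk Gk (M 0 z0 z0) (M 0 z0 (ne1 i))"
    by (rule fadj_sym, rule sZ[OF Fa F00 ik(1)]) (auto simp: ne1_def z0_def)
  have s2: "fadj FFk Gk (M 0 z0 (ne1 i)) (M 1 z0 (ne1 i))"
    by (rule sU0[OF Fa Fb]) (auto simp: ne1_def z0_def)
  have s3: "fadj FFk Gk (M 1 z0 (ne1 i)) (M 1 z0 z0)"
    by (rule sZ[OF Fb F10 ik(1)]) (auto simp: ne1_def z0_def)
  show ?thesis
  proof (rule gpath_intro[where f=sig])
    show "chain (fadj FFk Gk) (path (PF i))" unfolding path_def using s1 s2 s3 by simp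
    show "distinct (map sig (path (PF i)))" unfolding path_def using ik by (simp add: sig_simps)
  qed (use Fa Fb uF[simplified] u'F[simplified] in \<open>auto simp: path_def M0 M1\<close>)
qed

lemma gp_PG:
  assumes ij: "(i,j) \<in> pairs"
  shows "gpath FFk Gk (path (PG i j)) u u'"
proof -
  have ik: "i < k" "yv i > 0" "j < k" "wv j > 1" using pairs_in[OF ij] unfolding PS_def QS_def by auto
  have Fa: "M 0 (e1 i) z0 \<in> FFk"
    by (rule MF2) (use ik in \<open>auto simp: e1_def z0_def\<close>)
  have Fb: "M 1 (e1 i) z0 \<in> FFk"
    by (rule MF2) (use ik in \<open>auto simp: e1_def z0_def\<close>)
  have Fc: "M 1 (e1 i) (e1 j) \<in> FFk"
    by (rule MF2) (use ik in \<open>auto simp: e1_def z0_def\<close>)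
  have Fd: "M 1 z0 (e1 j) \<in> FFk"
    by (rule MF2) (use ik in \<open>auto simp: e1_def z0_def\<close>)
  have s1: "fadj FFk Gk (M 0 z0 z0) (M 0 (e1 i) z0)"
    by (rule sX[OF F00 Fa ik(1)]) (auto simp: e1_def z0_def)
  have s2: "fadj FFk Gk (M 0 (e1 i) z0) (M 1 (e1 i) z0)"
    by (rule sU0[OF Fa Fb]) (auto simp: e1_def z0_def)
  have s3: "fadj FFk Gk (M 1 (e1 i) z0) (M 1 (e1 i) (e1 j))"
    by (rule sZ[OF Fb Fc ik(3)]) (auto simp: e1_def z0_def)
  have s4: "fadj FFk Gk (M 1 (e1 i) (e1 j)) (M 1 z0 (e1 j))"
    by (rule fadj_sym, rule sX[OF Fd Fc ik(1)]) (auto simp: e1_def z0_def)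
  have s5: "fadj FFk Gk (M 1 z0 (e1 j)) (M 1 z0 z0)"
    by (rule fadj_sym, rule sZ[OF F10 Fd ik(3)]) (auto simp: e1_def z0_def)
  show ?thesis
  proof (rule gpath_intro[where f=sig])
    show "chain (fadj FFk Gk) (path (PG i j))" unfolding path_def using s1 s2 s3 s4 s5 by simp
    show "distinct (map sig (path (PG i j)))" unfolding path_def using ik by (simp add: sig_simps)
  qed (use Fa Fb Fc Fd uF[simplified] u'F[simplified] in \<open>auto simp: path_def M0 M1\<close>)
qed

lemma gp_all: "p \<in> IDs \<Longrightarrow> gpath FFk Gk (path p) u u'"
  unfolding IDs_def using gp_PA gp_PB gp_PD gp_PE gp_PF gp_PG by auto

end


context setting begin

definition sigE where "sigE p = (\<lambda>E. sig ` E) ` path_edges (path p)"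

abbreviation "s0 \<equiv> (0::int, 0::int, 0::int, {}::nat set, {}::nat set)"
abbreviation "s1 \<equiv> (1::int, 0::int, 0::int, {}::nat set, {}::nat set)"

lemmas pe_simps = path_edges_Cons2 path_edges_single

lemma sigE_PA: "sigE PA = {{s0, s1}}"
  unfolding sigE_def path_def by (simp add: pe_simps sig_simps)

lemma sigE_PB1: "D \<subseteq> {..<k} \<Longrightarrow> card D = 1 \<Longrightarrow>
   sigE (PB D) = {{s0, (1,1,0,D,{})}, {(1,1,0,D,{}), s1}}"
  unfolding sigE_def path_def by (simp add: pe_simps sig_simps)

lemma sigE_PB2: "D \<subseteq> {..<k} \<Longrightarrow> card D \<noteq> 1 \<Longrightarrow>
   sigE (PB D) = {{s0, (1,int (card D),0,D,{})}, {(1,int (card D),0,D,{}), (0,0,int (card D),{},D)}, {(0,0,int (card D),{},D), s1}}"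
  unfolding sigE_def path_def by (simp add: pe_simps sig_simps)

lemma sigE_PD: "i < k \<Longrightarrow> sigE (PD i) = {{s0, (0,0,1,{},{i})}, {(0,0,1,{},{i}), s1}}"
  unfolding sigE_def path_def by (simp add: pe_simps sig_simps)

lemma sigE_PE: "i < k \<Longrightarrow> sigE (PE i) = {{s0, (0,-1,0,{i},{})}, {(0,-1,0,{i},{}), (1,-1,0,{i},{})}, {(1,-1,0,{i},{}), s1}}"
  unfolding sigE_def path_def by (simp add: pe_simps sig_simps)

lemma sigE_PF: "i < k \<Longrightarrow> sigE (PF i) = {{s0, (0,0,-1,{},{i})}, {(0,0,-1,{},{i}), (1,0,-1,{},{i})}, {(1,0,-1,{},{i}), s1}}"
  unfolding sigE_def path_def by (simp add: pe_simps sig_simps)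

lemma sigE_PG: "i < k \<Longrightarrow> j < k \<Longrightarrow> sigE (PG i j) = {{s0, (0,1,0,{i},{})}, {(0,1,0,{i},{}), (1,1,0,{i},{})},
   {(1,1,0,{i},{}), (1,1,1,{i},{j})}, {(1,1,1,{i},{j}), (1,0,1,{},{j})}, {(1,0,1,{},{j}), s1}}"
  unfolding sigE_def path_def by (simp add: pe_simps sig_simps)

lemma pairs_inj:
  assumes "(i,j) \<in> pairs" "(i',j') \<in> pairs" shows "i = i' \<longleftrightarrow> j = j'"
proof -
  let ?xs = "sorted_list_of_set PS" and ?ys = "sorted_list_of_set QS"
  have d: "distinct ?xs" "distinct ?ys" by auto
  obtain n where n: "n < min (length ?xs) (length ?ys)" "?xs ! n = i" "?ys ! n = j"
    using assms(1) unfolding pairs_def set_zip by auto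
  obtain n' where n': "n' < min (length ?xs) (length ?ys)" "?xs ! n' = i'" "?ys ! n' = j'"
    using assms(2) unfolding pairs_def set_zip by auto
  have "i = i' \<longleftrightarrow> n = n'" using n n' d(1) nth_eq_iff_index_eq by (metis min_less_iff_conj)
  moreover have "j = j' \<longleftrightarrow> n = n'" using n n' d(2) nth_eq_iff_index_eq by (metis min_less_iff_conj)
  ultimately show ?thesis by simp
qed

lemma IDs_cases:
  assumes "p \<in> IDs"
  shows "p = PA \<or> (\<exists>D. p = PB D \<and> D \<subseteq> {..<k} \<and> D \<noteq> {}) \<or> (\<exists>i. p = PD i \<and> i < k)
    \<or> (\<exists>i. p = PE i \<and> i < k) \<or> (\<exists>i. p = PF i \<and> i < k) \<or> (\<exists>i j. p = PG i j \<and> (i,j) \<in> pairs \<and> i < k \<and> j < k)"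
  using assms pairs_in unfolding IDs_def XL_def ZL_def PS_def QS_def by fastforce

end


context setting begin

lemma sigE_PB: "D \<subseteq> {..<k} \<Longrightarrow> sigE (PB D) = {{s0, (1,int (card D),0,D,{})}} \<union>
   (if card D = 1 then {{(1,1,0,D,{}), s1}} else {{(1,int (card D),0,D,{}), (0,0,int (card D),{},D)}, {(0,0,int (card D),{},D), s1}})"
  using sigE_PB1[of D] sigE_PB2[of D] by auto

lemma sigE_disj:
  assumes p: "p \<in> IDs" and q: "q \<in> IDs" and pq: "p \<noteq> q"
  shows "sigE p \<inter> sigE q = {}"
proof -
  have cD: "\<And>D. D \<subseteq> {..<k} \<Longrightarrow> D \<noteq> {} \<Longrightarrow> card D \<ge> 1"
    using finite_subset by (metis card_0_eq finite_lessThan less_one not_le)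
  have c1: "\<And>D i. card D = 1 \<Longrightarrow> D = {i} \<Longrightarrow> True" by simp
  from IDs_cases[OF p] IDs_cases[OF q] pq show ?thesis
  proof (elim disjE exE conjE)
    fix D D' assume "p = PB D" "q = PB D'" "D \<subseteq> {..<k}" "D' \<subseteq> {..<k}" "p \<noteq> q"
    then show ?thesis by (auto simp: sigE_PB doubleton_eq_iff split: if_splits)
  next
    fix i j i' j' assume "p = PG i j" "q = PG i' j'" "(i,j) \<in> pairs" "(i',j') \<in> pairs" "p \<noteq> q" "i < k" "j < k" "i' < k" "j' < k"
    then show ?thesis using pairs_inj[of i j i' j'] by (auto simp: sigE_PG doubleton_eq_iff)
  qed (auto simp: sigE_PA sigE_PB sigE_PD sigE_PE sigE_PF sigE_PG doubleton_eq_iff dest: cD split: if_splits)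
qed

lemma edges_disj:
  assumes p: "p \<in> IDs" and q: "q \<in> IDs" and pq: "p \<noteq> q"
  shows "path_edges (path p) \<inter> path_edges (path q) = {}"
proof (rule ccontr)
  assume "path_edges (path p) \<inter> path_edges (path q) \<noteq> {}"
  then obtain E where "E \<in> path_edges (path p)" "E \<in> path_edges (path q)" by auto
  then have "sig ` E \<in> sigE p \<inter> sigE q" unfolding sigE_def by auto
  then show False using sigE_disj[OF p q pq] by auto
qed

end


context setting begin

lemma finite_sets: "finite XL" "finite ZL" "finite PS" "finite QS" "finite pairs"
  unfolding XL_def ZL_def PS_def QS_def pairs_def by auto

lemma card_pairs: "card pairs = min (card PS) (card QS)"
proof -
  let ?xs = "sorted_list_of_set PS" and ?ys = "sorted_list_of_set QS"
  have "distinct (zip ?xs ?ys)" by (rule distinct_zipI1) simp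
  then have "card pairs = length (zip ?xs ?ys)" unfolding pairs_def by (rule distinct_card)
  then show ?thesis by simp
qed

lemma card_S: "card {D. D \<subseteq> {..<k} \<and> D \<noteq> {}} = 2^k - 1"
proof -
  have e: "{D. D \<subseteq> {..<k} \<and> D \<noteq> {}} = Pow {..<k} - {{}}" by auto
  show ?thesis unfolding e by (simp add: card_Pow)
qed

lemma card_IDs: "card IDs = 2^k + k + card XL + card ZL + min (card PS) (card QS)"
proof -
  let ?S = "{D. D \<subseteq> {..<k} \<and> D \<noteq> {}}"
  let ?G = "(\<lambda>(i,j). PG i j) ` pairs"
  have fS: "finite ?S" by (rule finite_subset[of _ "Pow {..<k}"]) auto
  have fin: "finite (PB ` ?S)" "finite (PD ` {..<k})" "finite (PE ` XL)" "finite (PF ` ZL)" "finite ?G"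
    using fS finite_sets by auto
  have c: "card (PB ` ?S) = 2^k - 1" "card (PD ` {..<k}) = k" "card (PE ` XL) = card XL"
      "card (PF ` ZL) = card ZL"
    using card_S by (auto simp: card_image inj_on_def)
  have "card ?G = card pairs" by (rule card_image) (auto simp: inj_on_def)
  have "card IDs = card ({PA} \<union> PB ` ?S \<union> PD ` {..<k} \<union> PE ` XL \<union> PF ` ZL \<union> ?G)" unfolding IDs_def by simp
  also have "\<dots> = card ({PA} \<union> PB ` ?S \<union> PD ` {..<k} \<union> PE ` XL \<union> PF ` ZL) + card ?G"
    by (rule card_Un_disjoint) (use fin in auto)
  also have "card ({PA} \<union> PB ` ?S \<union> PD ` {..<k} \<union> PE ` XL \<union> PF ` ZL) = card ({PA} \<union> PB ` ?S \<union> PD ` {..<k} \<union> PE ` XL) + card (PF ` ZL)"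
    by (rule card_Un_disjoint) (use fin in auto)
  also have "card ({PA} \<union> PB ` ?S \<union> PD ` {..<k} \<union> PE ` XL) = card ({PA} \<union> PB ` ?S \<union> PD ` {..<k}) + card (PE ` XL)"
    by (rule card_Un_disjoint) (use fin in auto)
  also have "card ({PA} \<union> PB ` ?S \<union> PD ` {..<k}) = card ({PA} \<union> PB ` ?S) + card (PD ` {..<k})"
    by (rule card_Un_disjoint) (use fin in auto)
  also have "card ({PA} \<union> PB ` ?S) = card {PA} + card (PB ` ?S)"
    by (rule card_Un_disjoint) (use fin in auto)
  finally show ?thesis using c card_pairs \<open>card ?G = card pairs\<close>
    by (simp add: Suc_leI)
qed

lemma finite_IDs: "finite IDs"
proof -
  have fS: "finite {D. D \<subseteq> {..<k} \<and> D \<noteq> {}}" by (rule finite_subset[of _ "Pow {..<k}"]) auto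
  then show ?thesis unfolding IDs_def using finite_sets by auto
qed

lemma count_ineq:
  "min (card {i. i<k \<and> u i + u (k+i) > 0}) (card {i. i<k \<and> u' (2*k+i) + u' (3*k+i) > 0})
     \<le> card XL + card ZL + min (card PS) (card QS)"
proof -
  have A: "card {i. i<k \<and> u i + u (k+i) > 0} \<le> card XL + card PS"
  proof -
    have "{i. i<k \<and> u i + u (k+i) > 0} \<subseteq> XL \<union> PS"
      unfolding XL_def PS_def using nn(1) by (auto simp: xv_def yv_def split: if_splits)
    then have "card {i. i<k \<and> u i + u (k+i) > 0} \<le> card (XL \<union> PS)"
      using finite_sets by (intro card_mono) auto
    also have "\<dots> \<le> card XL + card PS" by (rule card_Un_le)
    finally show ?thesis .
  qed
  have G: "card {i. i<k \<and> u' (2*k+i) + u' (3*k+i) > 0} \<le> card ZL + card QS"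
  proof -
    have "{i. i<k \<and> u' (2*k+i) + u' (3*k+i) > 0} \<subseteq> ZL \<union> QS"
    proof
      fix i assume "i \<in> {i. i<k \<and> u' (2*k+i) + u' (3*k+i) > 0}"
      then have i: "i < k" "u' (2*k+i) + u' (3*k+i) > 0" by auto
      then show "i \<in> ZL \<union> QS" unfolding ZL_def QS_def using nn(1)[OF i(1)] Uf(1)[OF i(1)]
        by (auto simp: zv_def wv_def sz_def)
    qed
    then have "card {i. i<k \<and> u' (2*k+i) + u' (3*k+i) > 0} \<le> card (ZL \<union> QS)"
      using finite_sets by (intro card_mono) auto
    also have "\<dots> \<le> card ZL + card QS" by (rule card_Un_le)
    finally show ?thesis .
  qed
  show ?thesis using A G by linarith
qed

lemma delta_le: "min_degree FFk Gk \<le> card IDs"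
proof -
  have "min_degree FFk Gk \<le> card {i. i<k \<and> u i + u (k+i) > 0} + k + 2^k" by (rule delta_low[OF uF])
  moreover have "min_degree FFk Gk \<le> k + card {i. i<k \<and> u' (2*k+i) + u' (3*k+i) > 0} + 2^k" by (rule delta_high[OF u'F])
  ultimately show ?thesis using count_ineq card_IDs by linarith
qed

theorem main:
  "\<exists>Ps. length Ps = min_degree FFk Gk \<and> (\<forall>p \<in> set Ps. gpath FFk Gk p u u') \<and>
     (\<forall>i<length Ps. \<forall>j<length Ps. i \<noteq> j \<longrightarrow> path_edges (Ps ! i) \<inter> path_edges (Ps ! j) = {})"
proof -
  obtain L where L: "distinct L" "set L = IDs" using finite_distinct_list[OF finite_IDs] by blast
  have lenL: "length L = card IDs" using L distinct_card by fastforce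
  let ?d = "min_degree FFk Gk"
  define Ps where "Ps = map path (take ?d L)"
  have len: "length Ps = ?d" unfolding Ps_def using delta_le lenL by simp
  have sub: "set (take ?d L) \<subseteq> IDs" using L(2) set_take_subset by metis
  have gp: "\<forall>p \<in> set Ps. gpath FFk Gk p u u'" unfolding Ps_def using sub gp_all by auto
  have dj: "\<forall>i<length Ps. \<forall>j<length Ps. i \<noteq> j \<longrightarrow> path_edges (Ps ! i) \<inter> path_edges (Ps ! j) = {}"
  proof (intro allI impI)
    fix i j assume i: "i < length Ps" and j: "j < length Ps" and ij: "i \<noteq> j"
    have dt: "distinct (take ?d L)" using L(1) by simp
    have li: "i < length (take ?d L)" "j < length (take ?d L)" using i j unfolding Ps_def by auto
    have ne: "take ?d L ! i \<noteq> take ?d L ! j" using dt li ij nth_eq_iff_index_eq by blast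
    have inI: "take ?d L ! i \<in> IDs" "take ?d L ! j \<in> IDs" using sub li nth_mem by blast+
    show "path_edges (Ps ! i) \<inter> path_edges (Ps ! j) = {}"
      unfolding Ps_def using edges_disj[OF inI ne] li by simp
  qed
  show ?thesis using len gp dj by blast
qed

end


lemma gpath_rev:
  assumes "gpath F Mv p a c" shows "gpath F Mv (rev p) c a"
proof -
  have g: "p \<noteq> []" "hd p = a" "last p = c" "distinct p" "set p \<subseteq> F"
    "\<And>i. Suc i < length p \<Longrightarrow> fadj F Mv (p ! i) (p ! Suc i)"
    using assms unfolding gpath_def by auto
  have "\<And>i. Suc i < length (rev p) \<Longrightarrow> fadj F Mv (rev p ! i) (rev p ! Suc i)"
  proof -
    fix i assume i: "Suc i < length (rev p)"
    define m where "m = length p - Suc (Suc i)"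
    have m: "Suc m < length p" "length p - Suc i = Suc m" "length p - Suc (Suc i) = m" using i unfolding m_def by auto
    have "rev p ! i = p ! Suc m" "rev p ! Suc i = p ! m" using i m by (auto simp: rev_nth)
    then show "fadj F Mv (rev p ! i) (rev p ! Suc i)" using g(6)[OF m(1)] fadj_sym by metis
  qed
  then show ?thesis unfolding gpath_def using g by (auto simp: hd_rev last_rev)
qed

lemma path_edges_rev_sub: "path_edges (rev q) \<subseteq> path_edges q"
proof
  fix E assume "E \<in> path_edges (rev q)"
  then obtain i where i: "E = {rev q ! i, rev q ! Suc i}" "Suc i < length (rev q)" unfolding path_edges_def by blast
  define m where "m = length q - Suc (Suc i)"
  have m: "Suc m < length q" "length q - Suc i = Suc m" "length q - Suc (Suc i) = m" using i unfolding m_def by auto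
  have "E = {q ! m, q ! Suc m}" using i m by (auto simp: rev_nth)
  then show "E \<in> path_edges q" unfolding path_edges_def using m(1) by blast
qed

lemma path_edges_rev: "path_edges (rev p) = path_edges p"
  using path_edges_rev_sub[of p] path_edges_rev_sub[of "rev p"] by auto

theorem lemma8:
  fixes k :: nat and b :: "nat \<Rightarrow> int" and s s' :: int and u u' :: "nat \<Rightarrow> int"
  defines "F \<equiv> fiber (2*k+1) (4*k+2) (Ak k) b"
      and "Gr \<equiv> graver (2*k+1) (4*k+2) (Ak k)"
  assumes "k \<ge> 1"
      and "b \<in> zvecs (2*k+1)"
      and "u \<in> box k b s" and "u' \<in> box k b s'" and "s \<noteq> s'"
      and "fadj F Gr u u'"
  shows "\<exists>Ps. length Ps = min_degree F Gr \<and>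
           (\<forall>p \<in> set Ps. gpath F Gr p u u') \<and>
           (\<forall>i<length Ps. \<forall>j<length Ps. i \<noteq> j \<longrightarrow>
               path_edges (Ps ! i) \<inter> path_edges (Ps ! j) = {})"
proof -
  have uF: "u \<in> FF k b" "u (4*k) = s" using assms(5) unfolding box_def by auto
  have u'F: "u' \<in> FF k b" "u' (4*k) = s'" using assms(6) unfolding box_def by auto
  have adj: "fadj (FF k b) (GR k) u u'" using assms(8) unfolding F_def Gr_def .
  have c: "isW k (\<lambda>n. u' n - u n) \<or> isU k (\<lambda>n. u' n - u n) \<or> isU k (\<lambda>n. u n - u' n)"
    using nb_cases[OF adj] .
  have notW: "\<not> isW k (\<lambda>n. u' n - u n)"
  proof
    assume "isW k (\<lambda>n. u' n - u n)"
    then obtain j where j: "j < k \<or> (2*k \<le> j \<and> j < 3*k)" and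
      d: "(\<lambda>n. u' n - u n) = dW k j \<or> (\<lambda>n. u' n - u n) = (\<lambda>n. - dW k j n)"
      unfolding isW_def by blast
    have "dW k j (4*k) = 0" using j by (auto simp: dW_def)
    then have "u' (4*k) - u (4*k) = 0" using d by (metis add.inverse_neutral)
    then show False using uF u'F assms(7) by simp
  qed
  show ?thesis
  proof (cases "isU k (\<lambda>n. u' n - u n)")
    case True
    interpret setting k b u u' using uF(1) u'F(1) True by unfold_locales
    show ?thesis using main unfolding F_def Gr_def .
  next
    case False
    then have U2: "isU k (\<lambda>n. u n - u' n)" using c notW by blast
    interpret S2: setting k b u' u using uF(1) u'F(1) U2 by unfold_locales
    obtain Ps where P: "length Ps = min_degree (FF k b) (GR k)" "\<forall>p \<in> set Ps. gpath (FF k b) (GR k) p u' u"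
      "\<forall>i<length Ps. \<forall>j<length Ps. i \<noteq> j \<longrightarrow> path_edges (Ps ! i) \<inter> path_edges (Ps ! j) = {}"
      using S2.main by blast
    have "length (map rev Ps) = min_degree F Gr" using P(1) unfolding F_def Gr_def by simp
    moreover have "\<forall>p \<in> set (map rev Ps). gpath F Gr p u u'" using P(2) gpath_rev unfolding F_def Gr_def by auto
    moreover have "\<forall>i<length (map rev Ps). \<forall>j<length (map rev Ps). i \<noteq> j \<longrightarrow>
       path_edges (map rev Ps ! i) \<inter> path_edges (map rev Ps ! j) = {}"
      using P(3) by (simp add: path_edges_rev)
    ultimately show ?thesis by blast
  qed
qed


end
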